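(* As formal power series in $q$ with integer coefficients, the following congruences hold coefficientwise modulo $5$: \begin{align*} \sum_{n\geq0}\overline{p}(20n)q^n&\equiv\phi(q)^3, & \sum_{n\geq0}\overline{p}(20n+5)q^n&\equiv-\phi(q)^2\psi(q^2),\\ \sum_{n\geq0}\overline{p}(20n+10)q^n&\equiv2\phi(q)\psi(q^2)^2, & \sum_{n\geq0}\overline{p}(20n+15)q^n&\equiv-3\psi(q^2)^3 . \end{align*}
   Context: An overpartition of a nonnegative integer $n$ is a partition of $n$ in which the first occurrence of each distinct part may be overlined. $\overline{p}(n)$ denotes the number of overpartitions of $n$, with $\overline{p}(0)=1$; equivalently $\sum_{n\ge0}\overline{p}(n)q^n=\prod_{k\ge1}\frac{1+q^k}{1-q^k}$. Ramanujan's theta functions are $\phi(q)=\sum_{n=-\infty}^{\infty}q^{n^2}$ and $\psi(q)=\sum_{n=0}^{\infty}q^{n(n+1)/2}$. *)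

theory Defs
  imports "HOL-Library.Multiset" "HOL-Computational_Algebra.Formal_Power_Series"
          "HOL-Number_Theory.Cong"
begin

text \<open>A partition of n: a multiset of positive integers with sum n.
  An overpartition of n: a partition together with the set of distinct parts
  whose first occurrence is overlined.\<close>
definition overpartitions :: "nat \<Rightarrow> (nat multiset \<times> nat set) set" where
  "overpartitions n = {(M, S). (\<forall>x\<in>#M. 0 < x) \<and> sum_mset M = n \<and> S \<subseteq> set_mset M}"

definition overpart :: "nat \<Rightarrow> nat" where
  "overpart n = card (overpartitions n)"

definition phi :: "int fps" where
  "phi = Abs_fps (\<lambda>n. int (card {k::int. k^2 = int n}))"

definition psi :: "int fps" where
  "psi = Abs_fps (\<lambda>n. int (card {k::nat. k * (k + 1) div 2 = n}))"

end

theory Submission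
  imports Defs
begin

lemma fps_numeral_mult_nth: "fps_nth (numeral k * (f::int fps)) n = numeral k * fps_nth f n"
  by (simp add: numeral_fps_const fps_mult_left_const_nth)

definition dl :: "nat \<Rightarrow> int fps \<Rightarrow> int fps" where
  "dl d f = fps_compose f (fps_X ^ d)"

lemma dl_nth: assumes "0 < d"
  shows "fps_nth (dl d f) n = (if d dvd n then fps_nth f (n div d) else 0)"
proof -
  have "fps_nth (dl d f) n = (\<Sum>i = 0..n. fps_nth f i * (if n = d * i then 1 else 0))"
    unfolding dl_def fps_compose_nth by (simp add: power_mult[symmetric] fps_X_power_nth mult.commute)
  also have "\<dots> = (\<Sum>i \<in> {0..n}. if i = n div d \<and> d dvd n then fps_nth f i else 0)"
    apply (rule sum.cong, simp)
    using assms by (auto simp: mult.commute)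
  also have "\<dots> = (if d dvd n then fps_nth f (n div d) else 0)"
    using assms by (auto simp: sum.delta' div_le_dividend)
  finally show ?thesis .
qed

lemma dl_mult: "0 < d \<Longrightarrow> dl d (f * g) = dl d f * dl d g"
  unfolding dl_def by (rule fps_compose_mult_distrib) simp
lemma dl_add: "dl d (f + g) = dl d f + dl d g"
  unfolding dl_def by (rule fps_compose_add_distrib)
lemma dl_diff: "dl d (f - g) = dl d f - dl d g"
  unfolding dl_def by (rule fps_compose_sub_distrib)
lemma dl_uminus: "dl d (- f) = - dl d f"
  unfolding dl_def by (rule fps_compose_uminus)
lemma dl_power: "0 < d \<Longrightarrow> dl d (f ^ k) = dl d f ^ k"
  by (induction k) (simp_all add: dl_mult, simp add: dl_def)
lemma dl_one [simp]: "dl d 1 = 1"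
  unfolding dl_def by simp
lemma dl_numeral: "0 < d \<Longrightarrow> dl d (numeral k) = numeral k"
  by (rule fps_ext) (auto simp: dl_nth fps_numeral_nth)
lemma dl_X: "0 < d \<Longrightarrow> dl d fps_X = fps_X ^ d"
  by (rule fps_ext) (auto simp: dl_nth fps_X_power_nth fps_X_nth)

definition fin :: "('a \<Rightarrow> nat) \<Rightarrow> bool" where
  "fin e \<longleftrightarrow> (\<forall>n. finite {k. e k = n})"

definition ser :: "('a \<Rightarrow> nat) \<Rightarrow> ('a \<Rightarrow> int) \<Rightarrow> int fps" where
  "ser e w = Abs_fps (\<lambda>n. \<Sum>k\<in>{k. e k = n}. w k)"

lemma ser_nth: "fps_nth (ser e w) n = (\<Sum>k\<in>{k. e k = n}. w k)"
  by (simp add: ser_def)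

lemma ser_add: "ser e w + ser e w' = ser e (\<lambda>k. w k + w' k)"
  by (rule fps_ext) (simp add: ser_nth sum.distrib)

lemma ser_scale: "fps_const c * ser e w = ser e (\<lambda>k. c * w k)"
  by (rule fps_ext) (simp add: ser_nth fps_mult_left_const_nth sum_distrib_left)

lemma ser_shift: "fps_X ^ r * ser e w = ser (\<lambda>k. r + e k) w"
proof (rule fps_ext)
  fix n
  show "fps_nth (fps_X ^ r * ser e w) n = fps_nth (ser (\<lambda>k. r + e k) w) n"
  proof (cases "n < r")
    case True
    then have "{k. r + e k = n} = {}" by auto
    then show ?thesis using True by (simp add: fps_X_power_mult_nth ser_nth)
  next
    case False
    then have "{k. r + e k = n} = {k. e k = n - r}" by auto
    then show ?thesis using False by (simp add: fps_X_power_mult_nth ser_nth)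
  qed
qed

lemma ser_dl: assumes "0 < d" shows "dl d (ser e w) = ser (\<lambda>k. d * e k) w"
proof (rule fps_ext)
  fix n
  show "fps_nth (dl d (ser e w)) n = fps_nth (ser (\<lambda>k. d * e k) w) n"
  proof (cases "d dvd n")
    case True
    then have "{k. d * e k = n} = {k. e k = n div d}" using assms by auto
    then show ?thesis using True assms by (simp add: dl_nth ser_nth)
  next
    case False
    then have "{k. d * e k = n} = {}" by auto
    then show ?thesis using False assms by (simp add: dl_nth ser_nth)
  qed
qed

lemma fin_pair: assumes "fin e" "fin e'" shows "fin (\<lambda>(k,l). e k + e' l)"
  unfolding fin_def
proof
  fix n
  have "{p. (\<lambda>(k,l). e k + e' l) p = n} \<subseteq> (\<Union>i\<in>{0..n}. {k. e k = i} \<times> {l. e' l = n - i})"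
    by auto
  moreover have "finite (\<Union>i\<in>{0..n}. {k. e k = i} \<times> {l. e' l = n - i})"
    using assms unfolding fin_def by auto
  ultimately show "finite {p. (\<lambda>(k,l). e k + e' l) p = n}" by (rule finite_subset)
qed

lemma ser_mult: assumes "fin e" "fin e'"
  shows "ser e w * ser e' w' = ser (\<lambda>(k,l). e k + e' l) (\<lambda>(k,l). w k * w' l)"
proof (rule fps_ext)
  fix n
  have fe: "\<And>i. finite {k. e k = i}" and fe': "\<And>i. finite {k. e' k = i}"
    using assms unfolding fin_def by auto
  have "fps_nth (ser e w * ser e' w') n =
     (\<Sum>i=0..n. (\<Sum>k\<in>{k. e k = i}. w k) * (\<Sum>l\<in>{l. e' l = n - i}. w' l))"
    by (simp add: fps_mult_nth ser_nth)
  also have "\<dots> = (\<Sum>i=0..n. \<Sum>p\<in>{k. e k = i} \<times> {l. e' l = n - i}. w (fst p) * w' (snd p))"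
    by (simp add: sum_product sum.cartesian_product case_prod_beta)
  also have "\<dots> = (\<Sum>p\<in>(\<Union>i\<in>{0..n}. {k. e k = i} \<times> {l. e' l = n - i}). w (fst p) * w' (snd p))"
    by (rule sum.UNION_disjoint[symmetric]) (auto simp: fe fe')
  also have "(\<Union>i\<in>{0..n}. {k. e k = i} \<times> {l. e' l = n - i}) = {p. (\<lambda>(k,l). e k + e' l) p = n}"
    by auto
  also have "(\<Sum>p\<in>{p. (\<lambda>(k,l). e k + e' l) p = n}. w (fst p) * w' (snd p)) =
      fps_nth (ser (\<lambda>(k,l). e k + e' l) (\<lambda>(k,l). w k * w' l)) n"
    by (simp add: ser_nth case_prod_beta)
  finally show "fps_nth (ser e w * ser e' w') n = fps_nth (ser (\<lambda>(k,l). e k + e' l) (\<lambda>(k,l). w k * w' l)) n" .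
qed

lemma ser_eq_bij:
  assumes "fin e" "fin e'" "bij_betw h A B"
    "\<And>k. k \<in> A \<Longrightarrow> e' (h k) = e k" "\<And>k. k \<in> A \<Longrightarrow> w' (h k) = w k"
    "\<And>k. k \<notin> A \<Longrightarrow> w k = 0" "\<And>k. k \<notin> B \<Longrightarrow> w' k = 0"
  shows "ser e w = ser e' w'"
proof (rule fps_ext)
  fix n
  have fe: "finite {k. e k = n}" and fe': "finite {k. e' k = n}"
    using assms unfolding fin_def by auto
  have "(\<Sum>k\<in>{k. e k = n}. w k) = (\<Sum>k\<in>{k. e k = n} \<inter> A. w k)"
    by (rule sum.mono_neutral_right) (use fe assms in auto)
  also have "\<dots> = (\<Sum>k\<in>{k. e' k = n} \<inter> B. w' k)"
  proof -
    have "h ` ({k. e k = n} \<inter> A) = {k. e' k = n} \<inter> B"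
    proof
      show "h ` ({k. e k = n} \<inter> A) \<subseteq> {k. e' k = n} \<inter> B"
        using assms(3,4) by (auto simp: bij_betw_def)
      show "{k. e' k = n} \<inter> B \<subseteq> h ` ({k. e k = n} \<inter> A)"
      proof
        fix y assume y: "y \<in> {k. e' k = n} \<inter> B"
        then obtain x where "x \<in> A" "y = h x" using assms(3) by (auto simp: bij_betw_def)
        then show "y \<in> h ` ({k. e k = n} \<inter> A)" using y assms(4) by auto
      qed
    qed
    then have bj: "bij_betw h ({k. e k = n} \<inter> A) ({k. e' k = n} \<inter> B)"
      using assms(3) by (auto simp: bij_betw_def intro: inj_on_subset)
    have "(\<Sum>k\<in>{k. e k = n} \<inter> A. w k) = (\<Sum>k\<in>{k. e k = n} \<inter> A. w' (h k))"
      using assms(5) by simp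
    also have "\<dots> = (\<Sum>k\<in>{k. e' k = n} \<inter> B. w' k)"
      by (rule sum.reindex_bij_betw[OF bj])
    finally show ?thesis .
  qed
  also have "\<dots> = (\<Sum>k\<in>{k. e' k = n}. w' k)"
    by (rule sum.mono_neutral_left) (use fe' assms in auto)
  finally show "fps_nth (ser e w) n = fps_nth (ser e' w') n" by (simp add: ser_nth)
qed

definition sg :: "int \<Rightarrow> int" where "sg j = (if even j then 1 else -1)"
definition sq :: "int \<Rightarrow> nat" where "sq j = nat (j^2)"
definition phim :: "int fps" where "phim = ser sq sg"

lemma fin_sq: "fin sq"
  unfolding fin_def
proof
  fix n
  have "{k. sq k = n} \<subseteq> {- int n..int n}"
  proof
    fix k assume "k \<in> {k. sq k = n}"
    then have "nat (k^2) = n" by (simp add: sq_def)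
    moreover have "\<bar>k\<bar> \<le> k^2"
    proof (cases "k = 0")
      case False
      then have "\<bar>k\<bar> * 1 \<le> \<bar>k\<bar> * \<bar>k\<bar>" by (intro mult_left_mono) auto
      then show ?thesis by (simp add: power2_eq_square abs_mult_self_eq)
    qed simp
    ultimately show "k \<in> {- int n..int n}" by auto
  qed
  then show "finite {k. sq k = n}" by (rule finite_subset) simp
qed

definition Ak :: "nat \<Rightarrow> int fps" where
  "Ak k = Abs_fps (\<lambda>i. if i = 0 then 1 else if k dvd i then 2 else 0)"

definition Qp :: "nat \<Rightarrow> int fps" where
  "Qp m = (\<Prod>k=1..m. Ak k)"

definition opl :: "nat \<Rightarrow> nat \<Rightarrow> (nat multiset \<times> nat set) set" where
  "opl m n = {(M,S) \<in> overpartitions n. \<forall>x\<in>#M. x \<le> m}"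

lemma coefA: assumes "0 < k"
  shows "fps_nth (P * Ak k) n = (\<Sum>j=0..n div k. (if j = 0 then 1 else 2) * fps_nth P (n - j*k))"
proof -
  have "fps_nth (P * Ak k) n = (\<Sum>i=0..n. fps_nth (Ak k) i * fps_nth P (n - i))"
    by (subst mult.commute) (simp add: fps_mult_nth)
  also have "\<dots> = (\<Sum>i\<in>(\<lambda>j. j*k) ` {0..n div k}. fps_nth (Ak k) i * fps_nth P (n - i))"
  proof (rule sum.mono_neutral_right)
    show "(\<lambda>j. j*k) ` {0..n div k} \<subseteq> {0..n}"
      using assms by (auto simp: less_eq_div_iff_mult_less_eq)
    show "\<forall>i\<in>{0..n} - (\<lambda>j. j * k) ` {0..n div k}. fps_nth (Ak k) i * fps_nth P (n - i) = 0"
    proof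
      fix i assume i: "i \<in> {0..n} - (\<lambda>j. j * k) ` {0..n div k}"
      have "\<not> k dvd i"
      proof
        assume "k dvd i"
        then obtain j where "i = j * k" by (metis dvdE mult.commute)
        moreover have "j \<le> n div k" using i \<open>i = j * k\<close> assms
          by (auto simp: less_eq_div_iff_mult_less_eq)
        ultimately show False using i by auto
      qed
      then show "fps_nth (Ak k) i * fps_nth P (n - i) = 0"
        by (auto simp: Ak_def)
    qed
  qed simp
  also have "\<dots> = (\<Sum>j=0..n div k. fps_nth (Ak k) (j*k) * fps_nth P (n - j*k))"
    by (subst sum.reindex) (auto simp: inj_on_def assms)
  also have "\<dots> = (\<Sum>j=0..n div k. (if j = 0 then 1 else 2) * fps_nth P (n - j*k))"
    using assms by (intro sum.cong) (auto simp: Ak_def)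
  finally show ?thesis .
qed

lemma count_le_sum: "count M k * k \<le> sum_mset (M :: nat multiset)"
proof -
  have "M = filter_mset (\<lambda>x. x = k) M + filter_mset (\<lambda>x. \<not> x = k) M"
    by (rule multiset_partition)
  then have "sum_mset M = sum_mset (filter_mset (\<lambda>x. x = k) M) + sum_mset (filter_mset (\<lambda>x. \<not> x = k) M)"
    by (metis sum_mset.union)
  moreover have "filter_mset (\<lambda>x. x = k) M = replicate_mset (count M k) k"
    by (simp add: filter_eq_replicate_mset)
  ultimately show ?thesis by simp
qed

lemma mem_le_sum: "x \<in># M \<Longrightarrow> x \<le> sum_mset (M :: nat multiset)"
  using sum_mset.remove by fastforce

lemma opl_0: "opl 0 n = (if n = 0 then {({#}, {})} else {})"
proof -
  have "(M,S) \<in> opl 0 n \<longleftrightarrow> n = 0 \<and> M = {#} \<and> S = {}" for M S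
  proof
    assume a: "(M,S) \<in> opl 0 n"
    then have "set_mset M = {}" unfolding opl_def overpartitions_def by fastforce
    then show "n = 0 \<and> M = {#} \<and> S = {}" using a unfolding opl_def overpartitions_def by auto
  next
    assume "n = 0 \<and> M = {#} \<and> S = {}"
    then show "(M,S) \<in> opl 0 n" unfolding opl_def overpartitions_def by auto
  qed
  then show ?thesis by auto
qed

lemma in_diff_rep: "x \<in># M - replicate_mset j k \<longleftrightarrow> (x \<in># M \<and> (x \<noteq> k \<or> j < count M k))"
  by (auto simp: in_diff_count) (metis count_eq_zero_iff gr_implies_not0)

lemma opl_notin: "(M,S) \<in> opl m n \<Longrightarrow> Suc m \<notin> S"
  unfolding opl_def overpartitions_def by fastforce

lemma opl_step:
  fixes m n j :: nat
  assumes "1 \<le> j" "j * Suc m \<le> n"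
  shows "bij_betw (\<lambda>(M,S). ((M - replicate_mset j (Suc m), S - {Suc m}), Suc m \<in> S))
     {(M,S) \<in> opl (Suc m) n. count M (Suc m) = j} (opl m (n - j * Suc m) \<times> UNIV)"
proof (rule bij_betw_byWitness[where f' = "\<lambda>((M',S'),b). (M' + replicate_mset j (Suc m), if b then insert (Suc m) S' else S')"])
  define k where "k = Suc m"
  have sub: "replicate_mset j k \<subseteq># M" if "count M k = j" for M
    using that by (auto simp: subseteq_mset_def)
  show "\<forall>a\<in>{(M,S) \<in> opl (Suc m) n. count M (Suc m) = j}.
     (\<lambda>((M',S'),b). (M' + replicate_mset j (Suc m), if b then insert (Suc m) S' else S'))
       ((\<lambda>(M,S). ((M - replicate_mset j (Suc m), S - {Suc m}), Suc m \<in> S)) a) = a"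
    using sub unfolding k_def by (auto simp: insert_absorb)
  show "\<forall>a\<in>opl m (n - j * Suc m) \<times> UNIV.
     (\<lambda>(M,S). ((M - replicate_mset j (Suc m), S - {Suc m}), Suc m \<in> S))
       ((\<lambda>((M',S'),b). (M' + replicate_mset j (Suc m), if b then insert (Suc m) S' else S')) a) = a"
  proof
    fix a assume "a \<in> opl m (n - j * Suc m) \<times> (UNIV :: bool set)"
    then obtain M S b where a: "a = ((M,S),b)" "(M,S) \<in> opl m (n - j * Suc m)" by auto
    then have "Suc m \<notin> S" using opl_notin by blast
    then show "(\<lambda>(M,S). ((M - replicate_mset j (Suc m), S - {Suc m}), Suc m \<in> S))
       ((\<lambda>((M',S'),b). (M' + replicate_mset j (Suc m), if b then insert (Suc m) S' else S')) a) = a"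
      using a(1) by auto
  qed
  show "(\<lambda>(M,S). ((M - replicate_mset j (Suc m), S - {Suc m}), Suc m \<in> S)) `
     {(M,S) \<in> opl (Suc m) n. count M (Suc m) = j} \<subseteq> opl m (n - j * Suc m) \<times> UNIV"
  proof
    fix y assume "y \<in> (\<lambda>(M,S). ((M - replicate_mset j (Suc m), S - {Suc m}), Suc m \<in> S)) `
     {(M,S) \<in> opl (Suc m) n. count M (Suc m) = j}"
    then obtain M S where a: "(M,S) \<in> opl (Suc m) n" "j = count M (Suc m)"
      and y: "y = ((M - replicate_mset j (Suc m), S - {Suc m}), Suc m \<in> S)" by auto
    have s: "replicate_mset j (Suc m) \<subseteq># M" using sub a unfolding k_def by auto
    have "sum_mset (M - replicate_mset j (Suc m)) = n - j * Suc m"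
      using a s by (simp add: sum_mset_diff opl_def overpartitions_def)
    moreover have "\<forall>x\<in>#M - replicate_mset j (Suc m). 0 < x \<and> x \<le> m"
      using a by (auto simp: in_diff_rep opl_def overpartitions_def le_Suc_eq)
    moreover have "S - {Suc m} \<subseteq> set_mset (M - replicate_mset j (Suc m))"
      using a by (auto simp: in_diff_rep opl_def overpartitions_def)
    ultimately have "(M - replicate_mset j (Suc m), S - {Suc m}) \<in> opl m (n - j * Suc m)"
      by (auto simp: opl_def overpartitions_def)
    then show "y \<in> opl m (n - j * Suc m) \<times> UNIV" using y by auto
  qed
  show "(\<lambda>((M',S'),b). (M' + replicate_mset j (Suc m), if b then insert (Suc m) S' else S')) `
     (opl m (n - j * Suc m) \<times> UNIV) \<subseteq> {(M,S) \<in> opl (Suc m) n. count M (Suc m) = j}"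
  proof
    fix y assume "y \<in> (\<lambda>((M',S'),b). (M' + replicate_mset j (Suc m), if b then insert (Suc m) S' else S')) `
     (opl m (n - j * Suc m) \<times> UNIV)"
    then obtain M S b where a: "(M,S) \<in> opl m (n - j * Suc m)"
      and y: "y = (M + replicate_mset j (Suc m), if b then insert (Suc m) S else S)" by auto
    have c: "count M (Suc m) = 0" using a by (auto simp: opl_def overpartitions_def count_eq_zero_iff)
    have "Suc m \<in># replicate_mset j (Suc m)" using assms(1) by simp
    then have "(M + replicate_mset j (Suc m), if b then insert (Suc m) S else S) \<in> opl (Suc m) n \<and>
         count (M + replicate_mset j (Suc m)) (Suc m) = j"
      using a c assms by (auto simp: opl_def overpartitions_def)
    then show "y \<in> {(M,S) \<in> opl (Suc m) n. count M (Suc m) = j}" using y by auto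
  qed
qed

lemma opl_T0: "{(M,S) \<in> opl (Suc m) n. count M (Suc m) = 0} = opl m n"
proof -
  have "(M,S) \<in> opl (Suc m) n \<and> count M (Suc m) = 0 \<longleftrightarrow> (M,S) \<in> opl m n" for M S
  proof
    assume "(M,S) \<in> opl (Suc m) n \<and> count M (Suc m) = 0"
    then show "(M,S) \<in> opl m n" unfolding opl_def
      by (auto simp: le_Suc_eq count_eq_zero_iff)
  next
    assume "(M,S) \<in> opl m n"
    then show "(M,S) \<in> opl (Suc m) n \<and> count M (Suc m) = 0" unfolding opl_def
      by (auto simp: count_eq_zero_iff)
  qed
  then show ?thesis by auto
qed

lemma opl_bound: "(M,S) \<in> opl k n \<Longrightarrow> 0 < k \<Longrightarrow> count M k \<le> n div k"
  using count_le_sum[of M k] unfolding opl_def overpartitions_def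
  by (auto simp: less_eq_div_iff_mult_less_eq)

lemma opl_gf: "finite (opl m n) \<and> int (card (opl m n)) = fps_nth (Qp m) n"
proof (induction m arbitrary: n)
  case 0
  then show ?case by (simp add: opl_0 Qp_def)
next
  case (Suc m)
  define T where "T j = {(M,S) \<in> opl (Suc m) n. count M (Suc m) = j}" for j
  have U: "opl (Suc m) n = (\<Union>j\<in>{0..n div Suc m}. T j)"
    using opl_bound[of _ _ "Suc m" n] unfolding T_def by fastforce
  have cT: "finite (T j) \<and> card (T j) = (if j = 0 then 1 else 2) * card (opl m (n - j * Suc m))"
    if "j \<in> {0..n div Suc m}" for j
  proof (cases "j = 0")
    case True
    then show ?thesis using Suc.IH[of n] opl_T0[of m n] unfolding T_def by simp
  next
    case False
    have "j * Suc m \<le> n" using that by (simp add: less_eq_div_iff_mult_less_eq)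
    then have bj: "bij_betw (\<lambda>(M,S). ((M - replicate_mset j (Suc m), S - {Suc m}), Suc m \<in> S))
       (T j) (opl m (n - j * Suc m) \<times> UNIV)"
      using opl_step[of j m n] False unfolding T_def by simp
    have fin: "finite (opl m (n - j * Suc m) \<times> (UNIV :: bool set))"
      using Suc.IH by simp
    show ?thesis using bij_betw_finite[OF bj] fin bij_betw_same_card[OF bj] False
      by (simp add: card_cartesian_product)
  qed
  have fU: "finite (opl (Suc m) n)" using U cT by simp
  have "card (opl (Suc m) n) = (\<Sum>j\<in>{0..n div Suc m}. card (T j))"
    unfolding U by (rule card_UN_disjoint) (use cT in \<open>auto simp: T_def\<close>)
  then have "int (card (opl (Suc m) n)) =
      (\<Sum>j=0..n div Suc m. (if j = 0 then 1 else 2) * int (card (opl m (n - j * Suc m))))"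
    using cT by (simp add: of_nat_sum) (rule sum.cong; simp)
  also have "\<dots> = (\<Sum>j=0..n div Suc m. (if j = 0 then 1 else 2) * fps_nth (Qp m) (n - j * Suc m))"
    using Suc.IH by simp
  also have "\<dots> = fps_nth (Qp m * Ak (Suc m)) n"
    by (rule coefA[symmetric]) simp
  also have "Qp m * Ak (Suc m) = Qp (Suc m)"
    unfolding Qp_def by (simp add: prod.nat_ivl_Suc' mult.commute)
  finally show ?case using fU by simp
qed

lemma overpart_Qp: "n \<le> m \<Longrightarrow> int (overpart n) = fps_nth (Qp m) n"
proof -
  assume "n \<le> m"
  then have "opl m n = overpartitions n"
    unfolding opl_def overpartitions_def using mem_le_sum by fastforce
  then show ?thesis using opl_gf[of m n] by (simp add: overpart_def)
qed

lemma Ak_mult: "0 < k \<Longrightarrow> Ak k * (1 - fps_X ^ k) = 1 + fps_X ^ k"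
proof (rule fps_ext)
  fix n assume k: "0 < k"
  have "fps_nth (Ak k * (1 - fps_X ^ k)) n = fps_nth (Ak k) n - fps_nth (fps_X ^ k * Ak k) n"
    by (simp add: algebra_simps)
  also have "\<dots> = fps_nth (1 + fps_X ^ k) n"
    using k by (auto simp: fps_X_power_mult_nth Ak_def fps_X_power_nth dvd_minus_self)
  finally show "fps_nth (Ak k * (1 - fps_X ^ k)) n = fps_nth (1 + fps_X ^ k) n" .
qed

definition tr :: "nat \<Rightarrow> int fps \<Rightarrow> int fps \<Rightarrow> bool" where
  "tr M f g \<longleftrightarrow> (\<forall>i<M. fps_nth f i = fps_nth g i)"

lemma tr_refl[simp]: "tr M f f" by (simp add: tr_def)
lemma tr_sym: "tr M f g \<Longrightarrow> tr M g f" by (simp add: tr_def)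
lemma tr_trans: "tr M f g \<Longrightarrow> tr M g h \<Longrightarrow> tr M f h" by (simp add: tr_def)
lemma tr_mono: "tr M f g \<Longrightarrow> M' \<le> M \<Longrightarrow> tr M' f g" by (simp add: tr_def)
lemma tr_add: "tr M f g \<Longrightarrow> tr M f' g' \<Longrightarrow> tr M (f + f') (g + g')" by (simp add: tr_def)
lemma tr_diff: "tr M f g \<Longrightarrow> tr M f' g' \<Longrightarrow> tr M (f - f') (g - g')" by (simp add: tr_def)
lemma tr_mult: "tr M f g \<Longrightarrow> tr M f' g' \<Longrightarrow> tr M (f * f') (g * g')"
  unfolding tr_def fps_mult_nth by (auto intro!: sum.cong)
lemma tr_sum: "finite A \<Longrightarrow> (\<And>a. a \<in> A \<Longrightarrow> tr M (f a) (g a)) \<Longrightarrow> tr M (\<Sum>a\<in>A. f a) (\<Sum>a\<in>A. g a)"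
  by (induction A rule: finite_induct) (auto intro: tr_add)
lemma tr_shift: "tr M f g \<Longrightarrow> tr (M + k) (fps_X ^ k * f) (fps_X ^ k * g)"
  by (simp add: tr_def fps_X_power_mult_nth)
lemma tr_Xpow: "M \<le> k \<Longrightarrow> tr M (fps_X ^ k * f) 0"
  by (simp add: tr_def fps_X_power_mult_nth)

lemma tr_cancel: assumes "fps_nth u 0 = 1" "tr M (u * f) (u * g)" shows "tr M f g"
proof -
  define d where "d = f - g"
  have ud: "\<forall>i<M. fps_nth (u * d) i = 0" using assms(2) by (simp add: tr_def d_def algebra_simps)
  have "\<forall>i'\<le>i. i' < M \<longrightarrow> fps_nth d i' = 0" for i
  proof (induction i)
    case 0
    then show ?case using ud assms(1) by auto
  next
    case (Suc i)
    have "fps_nth d (Suc i) = 0" if "Suc i < M"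
    proof -
      have "fps_nth (u * d) (Suc i) = (\<Sum>l=0..Suc i. fps_nth u l * fps_nth d (Suc i - l))"
        by (simp add: fps_mult_nth)
      also have "\<dots> = fps_nth u 0 * fps_nth d (Suc i) + (\<Sum>l=Suc 0..Suc i. fps_nth u l * fps_nth d (Suc i - l))"
        by (simp add: sum.atLeast_Suc_atMost)
      also have "(\<Sum>l=Suc 0..Suc i. fps_nth u l * fps_nth d (Suc i - l)) = 0"
        using Suc.IH that by (intro sum.neutral) auto
      finally show ?thesis using ud that assms(1) by simp
    qed
    then show ?case using Suc.IH by (auto simp: le_Suc_eq)
  qed
  then show ?thesis by (auto simp: tr_def d_def)
qed

section \<open>Gaussian binomials in base X^2\<close>

fun qb :: "nat \<Rightarrow> int \<Rightarrow> int fps" where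
  "qb 0 r = (if r = 0 then 1 else 0)"
| "qb (Suc m) r = (if r < 0 then 0 else qb m (r - 1) + fps_X ^ (2 * nat r) * qb m r)"

definition pf :: "nat \<Rightarrow> int fps" where
  "pf n = (\<Prod>i=1..n. 1 - fps_X ^ (2 * i))"

lemma pf_0[simp]: "pf 0 = 1" by (simp add: pf_def)
lemma pf_Suc: "pf (Suc n) = pf n * (1 - fps_X ^ (2 * Suc n))"
  unfolding pf_def by (simp add: prod.nat_ivl_Suc' mult.commute)
lemma pf_nth0: "fps_nth (pf n) 0 = 1"
  by (induction n) (simp_all add: pf_Suc)
lemma pf_nz: "pf n \<noteq> 0"
  using pf_nth0[of n] by auto

lemma qb_zero: "r < 0 \<or> r > int m \<Longrightarrow> qb m r = 0"
  by (induction m arbitrary: r) auto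

lemma qb_m0: "qb m 0 = 1"
  by (induction m) (auto simp: qb_zero)

lemma qb_prod: "s \<le> m \<Longrightarrow> qb m (int s) * pf s * pf (m - s) = pf m"
proof (induction m arbitrary: s)
  case 0
  then show ?case by simp
next
  case (Suc m)
  show ?case
  proof (cases s)
    case 0
    then show ?thesis by (simp add: qb_m0)
  next
    case (Suc t)
    have t: "t \<le> m" using Suc.prems Suc by simp
    have A: "qb m (int t) * pf (Suc t) * pf (m - t) = pf m * (1 - fps_X ^ (2 * Suc t))"
      using Suc.IH[OF t] by (simp add: pf_Suc algebra_simps)
    have B: "fps_X ^ (2 * Suc t) * qb m (int (Suc t)) * pf (Suc t) * pf (m - t) =
             fps_X ^ (2 * Suc t) * pf m - fps_X ^ (2 * Suc m) * pf m"
    proof (cases "t = m")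
      case True
      then show ?thesis by (simp add: qb_zero)
    next
      case False
      then have "m - t = Suc (m - Suc t)" using t by simp
      then have "fps_X ^ (2 * Suc t) * qb m (int (Suc t)) * pf (Suc t) * pf (m - t) =
          fps_X ^ (2 * Suc t) * (qb m (int (Suc t)) * pf (Suc t) * pf (m - Suc t)) * (1 - fps_X ^ (2 * (m - t)))"
        by (simp add: pf_Suc algebra_simps)
      also have "\<dots> = fps_X ^ (2 * Suc t) * pf m * (1 - fps_X ^ (2 * (m - t)))"
        using Suc.IH[of "Suc t"] False t by simp
      also have "\<dots> = fps_X ^ (2 * Suc t) * pf m - (fps_X ^ (2 * Suc t) * fps_X ^ (2 * (m - t))) * pf m"
        by (simp add: algebra_simps)
      also have "fps_X ^ (2 * Suc t) * fps_X ^ (2 * (m - t)) = (fps_X :: int fps) ^ (2 * Suc m)"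
        using t by (simp add: power_add[symmetric])
      finally show ?thesis .
    qed
    have n1: "nat (1 + int t) = Suc t" by simp
    have "qb (Suc m) (int s) = qb m (int t) + fps_X ^ (2 * Suc t) * qb m (int (Suc t))"
      using Suc by (simp only: qb.simps of_nat_Suc n1) simp
    then have "qb (Suc m) (int s) * pf s * pf (Suc m - s) =
       qb m (int t) * pf (Suc t) * pf (m - t) + fps_X ^ (2 * Suc t) * qb m (int (Suc t)) * pf (Suc t) * pf (m - t)"
      using Suc by (simp add: algebra_simps)
    also have "\<dots> = pf m * (1 - fps_X ^ (2 * Suc m))"
      using A B by (simp add: algebra_simps)
    finally show ?thesis by (simp add: pf_Suc)
  qed
qed

lemma qb_pascal2: "qb (Suc m) r = fps_X ^ (2 * nat (int m + 1 - r)) * qb m (r - 1) + qb m r"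
proof -
  consider "r < 0" | "r > int m + 1" | "r = 0" | t where "r = int (Suc t)" "t \<le> m"
  proof -
    have "r < 0 \<or> r > int m + 1 \<or> r = 0 \<or> (\<exists>t. r = int (Suc t) \<and> t \<le> m)"
    proof (cases "0 < r \<and> r \<le> int m + 1")
      case True then have "r = int (Suc (nat r - 1)) \<and> nat r - 1 \<le> m" by auto
      then show ?thesis by blast
    qed auto
    then show ?thesis using that by blast
  qed
  then show ?thesis
  proof cases
    case 1 then show ?thesis by (simp add: qb_zero)
  next
    case 2 then show ?thesis by (simp add: qb_zero)
  next
    case 3 then show ?thesis by (simp add: qb_zero qb_m0)
  next
    case 4
    note t = 4(2)
    have nz: "pf (Suc t) * pf (m - t) \<noteq> 0" using pf_nz by simp
    have L: "qb (Suc m) r * (pf (Suc t) * pf (m - t)) = pf (Suc m)"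
      using qb_prod[of "Suc t" "Suc m"] 4 by (simp add: mult.assoc)
    have F: "fps_X ^ (2 * nat (int m + 1 - r)) * qb m (r - 1) * (pf (Suc t) * pf (m - t)) =
        fps_X ^ (2 * (m - t)) * pf m * (1 - fps_X ^ (2 * Suc t))"
    proof -
      have "nat (int m + 1 - r) = m - t" using 4 by simp
      moreover have "r - 1 = int t" using 4 by simp
      ultimately have "fps_X ^ (2 * nat (int m + 1 - r)) * qb m (r - 1) * (pf (Suc t) * pf (m - t)) =
          fps_X ^ (2 * (m - t)) * (qb m (int t) * pf t * pf (m - t)) * (1 - fps_X ^ (2 * Suc t))"
        by (simp add: pf_Suc algebra_simps)
      then show ?thesis using qb_prod[OF t] by simp
    qed
    have S: "qb m r * (pf (Suc t) * pf (m - t)) = pf m * (1 - fps_X ^ (2 * (m - t)))"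
    proof (cases "t = m")
      case True
      then show ?thesis using 4 by (simp add: qb_zero)
    next
      case False
      then have mt: "m - t = Suc (m - Suc t)" using t by simp
      have pmt: "pf (m - t) = pf (m - Suc t) * (1 - fps_X ^ (2 * (m - t)))"
        unfolding mt pf_Suc by simp
      have "qb m r * (pf (Suc t) * pf (m - t)) = (qb m (int (Suc t)) * pf (Suc t) * pf (m - Suc t)) * (1 - fps_X ^ (2 * (m - t)))"
        unfolding pmt 4(1) by (simp add: algebra_simps)
      also have "\<dots> = pf m * (1 - fps_X ^ (2 * (m - t)))"
        using qb_prod[of "Suc t" m] False t by (simp only:)
      finally show ?thesis .
    qed
    have P: "fps_X ^ (2 * (m - t)) * fps_X ^ (2 * Suc t) = (fps_X :: int fps) ^ (2 * Suc m)"
      using t by (simp add: power_add[symmetric])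
    have "(fps_X ^ (2 * nat (int m + 1 - r)) * qb m (r - 1) + qb m r) * (pf (Suc t) * pf (m - t)) =
       fps_X ^ (2 * (m - t)) * pf m * (1 - fps_X ^ (2 * Suc t)) + pf m * (1 - fps_X ^ (2 * (m - t)))"
      using F S by (simp add: distrib_right)
    also have "\<dots> = pf m - pf m * (fps_X ^ (2 * (m - t)) * fps_X ^ (2 * Suc t))"
      by (simp add: algebra_simps)
    also have "\<dots> = pf (Suc m)" by (simp only: P pf_Suc right_diff_distrib mult_1_right)
    finally show ?thesis using L nz by (metis mult_right_cancel)
  qed
qed

lemma qb_three: "qb (Suc (Suc m)) (r + 1) = (1 + fps_X ^ (2 * Suc m)) * qb m r
   + fps_X ^ (2 * nat (int m + 1 - r)) * qb m (r - 1) + fps_X ^ (2 * nat (r + 1)) * qb m (r + 1)"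
proof (cases "r + 1 < 0")
  case True
  then show ?thesis by (simp add: qb_zero)
next
  case False
  have A: "qb (Suc (Suc m)) (r + 1) = qb (Suc m) r + fps_X ^ (2 * nat (r + 1)) * qb (Suc m) (r + 1)"
    using False by simp
  have B: "qb (Suc m) (r + 1) = fps_X ^ (2 * nat (int m - r)) * qb m r + qb m (r + 1)"
    using qb_pascal2[of m "r + 1"] by simp
  have C: "fps_X ^ (2 * nat (r + 1)) * (fps_X ^ (2 * nat (int m - r)) * qb m r) = fps_X ^ (2 * Suc m) * qb m r"
  proof (cases "0 \<le> r \<and> r \<le> int m")
    case True
    then have "int (2 * nat (r + 1) + 2 * nat (int m - r)) = int (2 * Suc m)" by simp
    then have "2 * nat (r + 1) + 2 * nat (int m - r) = 2 * Suc m" by (simp only: of_nat_eq_iff)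
    then show ?thesis by (metis (no_types) mult.assoc power_add)
  next
    case False
    then show ?thesis by (auto simp: qb_zero)
  qed
  show ?thesis using A B C qb_pascal2[of m r] by (simp add: algebra_simps)
qed

section \<open>Finite Jacobi triple product at z = -1\<close>

definition tm :: "nat \<Rightarrow> int \<Rightarrow> int fps" where
  "tm n j = fps_const (sg j) * fps_X ^ sq j * qb (2 * n) (int n + j)"
definition Sm :: "nat \<Rightarrow> int fps" where
  "Sm n = (\<Sum>j\<in>{- int n..int n}. tm n j)"
definition On :: "nat \<Rightarrow> int fps" where
  "On n = (\<Prod>k=1..n. 1 - fps_X ^ (2 * k - 1))"

lemma On_Suc: "On (Suc n) = On n * (1 - fps_X ^ (2 * n + 1))"
  unfolding On_def by (simp add: prod.nat_ivl_Suc' mult.commute)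

lemma tm_zero: "\<bar>j\<bar> > int n \<Longrightarrow> tm n j = 0"
proof -
  assume "\<bar>j\<bar> > int n"
  then have "int n + j < 0 \<or> int n + j > int (2 * n)" by auto
  then show ?thesis unfolding tm_def using qb_zero by simp
qed

lemma tm_sum: assumes "a \<le> - int n" "int n \<le> b" shows "(\<Sum>j\<in>{a..b}. tm n j) = Sm n"
  unfolding Sm_def
  by (rule sum.mono_neutral_right) (use assms tm_zero in auto)

lemma sum_shift_int: "(\<Sum>j\<in>{a..b}. f (j + c)) = (\<Sum>j\<in>{a+c..b+(c::int)}. f j)"
  by (rule sum.reindex_bij_witness[of _ "\<lambda>j. j - c" "\<lambda>j. j + c"]) auto

lemma sg_pred: "sg (j - 1) = - sg j" and sg_succ: "sg (j + 1) = - sg j"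
  by (auto simp: sg_def)

lemma e1: assumes "0 \<le> int n + j - 1" "int n + j - 1 \<le> int (2 * n)"
  shows "sq j + 2 * nat (int (2 * n) + 1 - (int n + j)) = 2 * n + 1 + sq (j - 1)"
proof -
  have "int (sq j + 2 * nat (int (2 * n) + 1 - (int n + j))) = j^2 + 2 * (int n + 1 - j)"
    using assms by (simp add: sq_def)
  also have "\<dots> = 2 * int n + 1 + (j - 1)^2" by (simp add: power2_eq_square algebra_simps)
  also have "\<dots> = int (2 * n + 1 + sq (j - 1))" by (simp add: sq_def)
  finally show ?thesis by (simp only: of_nat_eq_iff)
qed

lemma e2: assumes "0 \<le> int n + j + 1"
  shows "sq j + 2 * nat (int n + j + 1) = 2 * n + 1 + sq (j + 1)"
proof -
  have "int (sq j + 2 * nat (int n + j + 1)) = j^2 + 2 * (int n + j + 1)"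
    using assms by (simp add: sq_def)
  also have "\<dots> = 2 * int n + 1 + (j + 1)^2" by (simp add: power2_eq_square algebra_simps)
  also have "\<dots> = int (2 * n + 1 + sq (j + 1))" by (simp add: sq_def)
  finally show ?thesis by (simp only: of_nat_eq_iff)
qed

lemma cneg: "fps_const (- c) = - fps_const (c::int)" by simp

lemma tm_step: "tm (Suc n) j = (1 + fps_X ^ (4 * n + 2)) * tm n j
    - fps_X ^ (2 * n + 1) * tm n (j - 1) - fps_X ^ (2 * n + 1) * tm n (j + 1)"
proof -
  have Q: "qb (2 * Suc n) (int (Suc n) + j) = (1 + fps_X ^ (4 * n + 2)) * qb (2 * n) (int n + j)
     + fps_X ^ (2 * nat (int (2 * n) + 1 - (int n + j))) * qb (2 * n) (int n + j - 1)
     + fps_X ^ (2 * nat (int n + j + 1)) * qb (2 * n) (int n + j + 1)"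
  proof -
    have a: "2 * Suc n = Suc (Suc (2 * n))" and b: "int (Suc n) + j = (int n + j) + 1"
      and c: "2 * Suc (2 * n) = 4 * n + 2" by simp_all
    show ?thesis unfolding a b qb_three c ..
  qed
  have P1: "fps_X ^ sq j * (fps_X ^ (2 * nat (int (2 * n) + 1 - (int n + j))) * qb (2 * n) (int n + j - 1))
     = fps_X ^ (2 * n + 1) * (fps_X ^ sq (j - 1) * qb (2 * n) (int n + (j - 1)))"
  proof (cases "0 \<le> int n + j - 1 \<and> int n + j - 1 \<le> int (2 * n)")
    case True
    then have ex: "sq j + 2 * nat (int (2 * n) + 1 - (int n + j)) = 2 * n + 1 + sq (j - 1)" using e1[of n j] by blast
    have i: "int n + (j - 1) = int n + j - 1" by simp
    have "fps_X ^ sq j * (fps_X ^ (2 * nat (int (2 * n) + 1 - (int n + j))) * qb (2 * n) (int n + j - 1))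
       = fps_X ^ (sq j + 2 * nat (int (2 * n) + 1 - (int n + j))) * qb (2 * n) (int n + j - 1)"
      by (simp only: power_add mult.assoc)
    also have "\<dots> = fps_X ^ (2 * n + 1 + sq (j - 1)) * qb (2 * n) (int n + j - 1)" by (simp only: ex)
    also have "\<dots> = fps_X ^ (2 * n + 1) * (fps_X ^ sq (j - 1) * qb (2 * n) (int n + (j - 1)))"
      by (simp only: power_add mult.assoc i)
    finally show ?thesis .
  next
    case False
    then show ?thesis by (auto simp: qb_zero add_diff_eq)
  qed
  have P2: "fps_X ^ sq j * (fps_X ^ (2 * nat (int n + j + 1)) * qb (2 * n) (int n + j + 1))
     = fps_X ^ (2 * n + 1) * (fps_X ^ sq (j + 1) * qb (2 * n) (int n + (j + 1)))"
  proof (cases "0 \<le> int n + j + 1")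
    case True
    then have ex: "sq j + 2 * nat (int n + j + 1) = 2 * n + 1 + sq (j + 1)" by (rule e2)
    have i: "int n + (j + 1) = int n + j + 1" by simp
    have "fps_X ^ sq j * (fps_X ^ (2 * nat (int n + j + 1)) * qb (2 * n) (int n + j + 1))
       = fps_X ^ (sq j + 2 * nat (int n + j + 1)) * qb (2 * n) (int n + j + 1)"
      by (simp only: power_add mult.assoc)
    also have "\<dots> = fps_X ^ (2 * n + 1 + sq (j + 1)) * qb (2 * n) (int n + j + 1)" by (simp only: ex)
    also have "\<dots> = fps_X ^ (2 * n + 1) * (fps_X ^ sq (j + 1) * qb (2 * n) (int n + (j + 1)))"
      by (simp only: power_add mult.assoc i)
    finally show ?thesis .
  next
    case False
    then show ?thesis by (auto simp: qb_zero add.assoc)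
  qed
  have "tm (Suc n) j = fps_const (sg j) * ((1 + fps_X ^ (4 * n + 2)) * (fps_X ^ sq j * qb (2 * n) (int n + j))
     + fps_X ^ sq j * (fps_X ^ (2 * nat (int (2 * n) + 1 - (int n + j))) * qb (2 * n) (int n + j - 1))
     + fps_X ^ sq j * (fps_X ^ (2 * nat (int n + j + 1)) * qb (2 * n) (int n + j + 1)))"
    unfolding tm_def Q by (simp add: algebra_simps)
  also have "\<dots> = fps_const (sg j) * ((1 + fps_X ^ (4 * n + 2)) * (fps_X ^ sq j * qb (2 * n) (int n + j))
     + fps_X ^ (2 * n + 1) * (fps_X ^ sq (j - 1) * qb (2 * n) (int n + (j - 1)))
     + fps_X ^ (2 * n + 1) * (fps_X ^ sq (j + 1) * qb (2 * n) (int n + (j + 1))))"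
    by (simp only: P1 P2)
  also have "\<dots> = (1 + fps_X ^ (4 * n + 2)) * tm n j
    - fps_X ^ (2 * n + 1) * tm n (j - 1) - fps_X ^ (2 * n + 1) * tm n (j + 1)"
    unfolding tm_def sg_pred sg_succ cneg by (simp add: algebra_simps del: fps_const_neg)
  finally show ?thesis .
qed

lemma Sm_On: "Sm n = On n ^ 2"
proof (induction n)
  case 0
  then show ?case by (simp add: Sm_def On_def tm_def sq_def sg_def qb_m0)
next
  case (Suc n)
  have s1: "(\<Sum>j\<in>{- int (Suc n)..int (Suc n)}. tm n j) = Sm n" by (rule tm_sum) auto
  have s2: "(\<Sum>j\<in>{- int (Suc n)..int (Suc n)}. tm n (j - 1)) = Sm n"
  proof -
    have "(\<Sum>j\<in>{- int (Suc n)..int (Suc n)}. tm n (j - 1)) = (\<Sum>j\<in>{- int (Suc n)..int (Suc n)}. tm n (j + -1))"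
      by simp
    also have "\<dots> = (\<Sum>j\<in>{- int (Suc n) + -1..int (Suc n) + -1}. tm n j)"
      by (rule sum_shift_int)
    also have "\<dots> = Sm n" by (rule tm_sum) auto
    finally show ?thesis .
  qed
  have s3: "(\<Sum>j\<in>{- int (Suc n)..int (Suc n)}. tm n (j + 1)) = Sm n"
  proof -
    have "(\<Sum>j\<in>{- int (Suc n)..int (Suc n)}. tm n (j + 1)) = (\<Sum>j\<in>{- int (Suc n) + 1..int (Suc n) + 1}. tm n j)"
      by (rule sum_shift_int)
    also have "\<dots> = Sm n" by (rule tm_sum) auto
    finally show ?thesis .
  qed
  have "Sm (Suc n) = (\<Sum>j\<in>{- int (Suc n)..int (Suc n)}. (1 + fps_X ^ (4 * n + 2)) * tm n j
    - fps_X ^ (2 * n + 1) * tm n (j - 1) - fps_X ^ (2 * n + 1) * tm n (j + 1))"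
    unfolding Sm_def tm_step by simp
  also have "\<dots> = (1 + fps_X ^ (4 * n + 2)) * Sm n - fps_X ^ (2 * n + 1) * Sm n - fps_X ^ (2 * n + 1) * Sm n"
    by (simp only: sum_subtractf sum_distrib_left[symmetric] s1 s2 s3)
  also have "\<dots> = (1 - fps_X ^ (2 * n + 1)) ^ 2 * Sm n"
  proof -
    have "(fps_X :: int fps) ^ (4 * n + 2) = fps_X ^ (2 * n + 1) * fps_X ^ (2 * n + 1)"
      by (simp add: power_add[symmetric])
    then show ?thesis by (simp add: power2_eq_square algebra_simps)
  qed
  finally show ?case using Suc.IH by (simp add: On_Suc power_mult_distrib)
qed

lemma tr_one_minus: "M \<le> k \<Longrightarrow> tr M (1 - fps_X ^ k) 1"
  using tr_diff[OF tr_refl[of M 1] tr_Xpow[of M k 1]] by simp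
lemma tr_one_plus: "M \<le> k \<Longrightarrow> tr M (1 + fps_X ^ k) 1"
  using tr_add[OF tr_refl[of M 1] tr_Xpow[of M k 1]] by simp

lemma pf_tr: "a \<le> b \<Longrightarrow> tr (2 * a + 2) (pf b) (pf a)"
proof (induction b rule: dec_induct)
  case base then show ?case by simp
next
  case (step b)
  have "tr (2 * a + 2) (pf b * (1 - fps_X ^ (2 * Suc b))) (pf a * 1)"
    by (rule tr_mult[OF step.IH tr_one_minus]) (use step in simp)
  then show ?case by (simp add: pf_Suc)
qed

lemma sq_abs: "sq j = nat \<bar>j\<bar> * nat \<bar>j\<bar>"
proof -
  have "sq j = nat (\<bar>j\<bar> * \<bar>j\<bar>)" by (simp add: sq_def power2_eq_square)
  also have "\<dots> = nat \<bar>j\<bar> * nat \<bar>j\<bar>" by (rule nat_mult_distrib) simp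
  finally show ?thesis .
qed

lemma ineq1: "t \<le> n \<Longrightarrow> 2 * n + 1 \<le> 2 * (n - t) + 2 + t * (t::nat)"
  by (cases t) (simp_all add: algebra_simps)

lemma qbpf: assumes "\<bar>j\<bar> \<le> int n"
  shows "tr (2 * (n - nat \<bar>j\<bar>) + 2) (qb (2 * n) (int n + j) * pf n) 1"
proof -
  define s where "s = nat (int n + j)"
  define a where "a = n - nat \<bar>j\<bar>"
  have s: "int s = int n + j" "s \<le> 2 * n" using assms by (auto simp: s_def)
  have a: "a \<le> s" "a \<le> 2 * n - s" "a \<le> 2 * n" "a \<le> n" using assms s by (auto simp: a_def)
  have P: "qb (2 * n) (int s) * pf s * pf (2 * n - s) = pf (2 * n)" using qb_prod s(2) by blast
  let ?M = "2 * a + 2"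
  have "tr ?M (qb (2 * n) (int s) * pf s * pf (2 * n - s)) (qb (2 * n) (int s) * pf a * pf a)"
    by (rule tr_mult[OF tr_mult[OF tr_refl pf_tr[OF a(1)]] pf_tr[OF a(2)]])
  then have "tr ?M (pf (2 * n)) (qb (2 * n) (int s) * pf a * pf a)" by (simp only: P)
  then have "tr ?M (qb (2 * n) (int s) * pf a * pf a) (pf a)"
    using pf_tr[OF a(3)] tr_sym tr_trans by blast
  moreover have "qb (2 * n) (int s) * pf a * pf a = pf a * (qb (2 * n) (int s) * pf a)" by (simp only: ac_simps)
  ultimately have "tr ?M (pf a * (qb (2 * n) (int s) * pf a)) (pf a * 1)" by simp
  then have "tr ?M (qb (2 * n) (int s) * pf a) 1" by (rule tr_cancel[OF pf_nth0])
  moreover have "tr ?M (qb (2 * n) (int s) * pf n) (qb (2 * n) (int s) * pf a)"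
    by (rule tr_mult[OF tr_refl pf_tr[OF a(4)]])
  ultimately have "tr ?M (qb (2 * n) (int s) * pf n) 1" by (rule tr_trans[rotated])
  then show ?thesis using s(1) by (simp add: a_def)
qed

lemma tm_tr: assumes "\<bar>j\<bar> \<le> int n"
  shows "tr (2 * n + 1) (tm n j * pf n) (fps_const (sg j) * fps_X ^ sq j)"
proof -
  have "tr (2 * (n - nat \<bar>j\<bar>) + 2 + sq j) (fps_X ^ sq j * (qb (2 * n) (int n + j) * pf n)) (fps_X ^ sq j * 1)"
    by (rule tr_shift[OF qbpf[OF assms]])
  then have "tr (2 * n + 1) (fps_X ^ sq j * (qb (2 * n) (int n + j) * pf n)) (fps_X ^ sq j * 1)"
  proof (rule tr_mono)
    have "nat \<bar>j\<bar> \<le> n" using assms by simp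
    then show "2 * n + 1 \<le> 2 * (n - nat \<bar>j\<bar>) + 2 + sq j" unfolding sq_abs by (rule ineq1)
  qed
  then have "tr (2 * n + 1) (fps_const (sg j) * (fps_X ^ sq j * (qb (2 * n) (int n + j) * pf n))) (fps_const (sg j) * (fps_X ^ sq j * 1))"
    by (rule tr_mult[OF tr_refl])
  then show ?thesis by (simp add: tm_def mult.assoc)
qed

lemma sq_big: "\<bar>k\<bar> > int n \<Longrightarrow> sq k > 2 * n"
proof -
  assume "\<bar>k\<bar> > int n"
  then have "nat \<bar>k\<bar> \<ge> n + 1" by auto
  then have "nat \<bar>k\<bar> * nat \<bar>k\<bar> \<ge> (n + 1) * (n + 1)" by (intro mult_le_mono) auto
  then show ?thesis by (simp add: sq_abs algebra_simps)
qed

lemma phim_tr: "tr (2 * n + 1) phim (\<Sum>j\<in>{- int n..int n}. fps_const (sg j) * fps_X ^ sq j)"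
  unfolding tr_def
proof (intro allI impI)
  fix i assume i: "i < 2 * n + 1"
  have sub: "{k. sq k = i} \<subseteq> {- int n..int n}"
  proof
    fix k assume "k \<in> {k. sq k = i}"
    then have "\<not> \<bar>k\<bar> > int n" using sq_big[of n k] i by auto
    then show "k \<in> {- int n..int n}" by auto
  qed
  have "fps_nth (\<Sum>j\<in>{- int n..int n}. fps_const (sg j) * fps_X ^ sq j) i
      = (\<Sum>j\<in>{- int n..int n}. if sq j = i then sg j else 0)"
    by (simp add: fps_sum_nth fps_mult_left_const_nth fps_X_power_nth eq_commute if_distrib cong: if_cong)
  also have "\<dots> = (\<Sum>j\<in>{- int n..int n} \<inter> {k. sq k = i}. sg j)"
    by (simp add: sum.inter_restrict)
  also have "{- int n..int n} \<inter> {k. sq k = i} = {k. sq k = i}" using sub by blast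
  finally show "fps_nth phim i = fps_nth (\<Sum>j\<in>{- int n..int n}. fps_const (sg j) * fps_X ^ sq j) i"
    by (simp add: phim_def ser_nth)
qed

lemma phim_On: "tr (2 * n + 1) phim (On n ^ 2 * pf n)"
proof -
  have "tr (2 * n + 1) (\<Sum>j\<in>{- int n..int n}. tm n j * pf n) (\<Sum>j\<in>{- int n..int n}. fps_const (sg j) * fps_X ^ sq j)"
  proof (rule tr_sum)
    fix j assume "j \<in> {- int n..int n}"
    then have "\<bar>j\<bar> \<le> int n" by auto
    then show "tr (2 * n + 1) (tm n j * pf n) (fps_const (sg j) * fps_X ^ sq j)" by (rule tm_tr)
  qed simp
  then have "tr (2 * n + 1) (Sm n * pf n) phim"
    unfolding Sm_def sum_distrib_right using phim_tr tr_sym tr_trans by blast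
  then show ?thesis using Sm_On tr_sym by simp
qed

definition Ep :: "nat \<Rightarrow> int fps" where "Ep m = (\<Prod>k=1..m. 1 - fps_X ^ k)"
definition Fp :: "nat \<Rightarrow> int fps" where "Fp m = (\<Prod>k=1..m. 1 + fps_X ^ k)"

lemma Ep_Suc: "Ep (Suc m) = Ep m * (1 - fps_X ^ Suc m)"
  unfolding Ep_def by (simp add: prod.nat_ivl_Suc' mult.commute)
lemma Fp_Suc: "Fp (Suc m) = Fp m * (1 + fps_X ^ Suc m)"
  unfolding Fp_def by (simp add: prod.nat_ivl_Suc' mult.commute)
lemma Ep_nth0: "fps_nth (Ep m) 0 = 1" by (induction m) (simp_all add: Ep_Suc, simp add: Ep_def)

lemma On_pf: "On n * pf n = Ep (2 * n)"
proof (induction n)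
  case 0 then show ?case by (simp add: On_def Ep_def)
next
  case (Suc n)
  have "On (Suc n) * pf (Suc n) = (On n * pf n) * (1 - fps_X ^ (2 * n + 1)) * (1 - fps_X ^ (2 * Suc n))"
    by (simp add: On_Suc pf_Suc algebra_simps)
  also have "\<dots> = Ep (2 * Suc n)" using Suc.IH by (simp add: Ep_Suc)
  finally show ?case .
qed

lemma Ep_Fp: "Ep m * Fp m = pf m"
proof (induction m)
  case 0 then show ?case by (simp add: Ep_def Fp_def)
next
  case (Suc m)
  have "(1 - fps_X ^ Suc m) * (1 + fps_X ^ Suc m) = (1 - fps_X ^ (2 * Suc m) :: int fps)"
    by (simp add: algebra_simps power_add[symmetric] mult_2)
  then have "Ep (Suc m) * Fp (Suc m) = (Ep m * Fp m) * (1 - fps_X ^ (2 * Suc m))"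
    by (simp add: Ep_Suc Fp_Suc algebra_simps)
  then show ?case using Suc.IH by (simp add: pf_Suc)
qed

lemma Ep_tr: "a \<le> b \<Longrightarrow> tr (a + 1) (Ep b) (Ep a)"
proof (induction b rule: dec_induct)
  case base then show ?case by simp
next
  case (step b)
  have "tr (a + 1) (Ep b * (1 - fps_X ^ Suc b)) (Ep a * 1)"
    by (rule tr_mult[OF step.IH tr_one_minus]) (use step in simp)
  then show ?case by (simp add: Ep_Suc)
qed

lemma Fp_tr: "a \<le> b \<Longrightarrow> tr (a + 1) (Fp b) (Fp a)"
proof (induction b rule: dec_induct)
  case base then show ?case by simp
next
  case (step b)
  have "tr (a + 1) (Fp b * (1 + fps_X ^ Suc b)) (Fp a * 1)"
    by (rule tr_mult[OF step.IH tr_one_plus]) (use step in simp)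
  then show ?case by (simp add: Fp_Suc)
qed

lemma OnFp: "tr (2 * n + 2) (On n * Fp (2 * n)) 1"
proof -
  have "pf n * (On n * Fp (2 * n)) = (On n * pf n) * Fp (2 * n)" by (simp only: ac_simps)
  also have "\<dots> = pf (2 * n)" by (simp only: On_pf Ep_Fp)
  finally have "pf n * (On n * Fp (2 * n)) = pf (2 * n)" .
  moreover have "tr (2 * n + 2) (pf (2 * n)) (pf n)" using pf_tr[of n "2 * n"] by simp
  ultimately have "tr (2 * n + 2) (pf n * (On n * Fp (2 * n))) (pf n * 1)" by simp
  then show ?thesis by (rule tr_cancel[OF pf_nth0])
qed

lemma phim_Fp: "tr (m + 1) (phim * Fp m) (Ep m)"
proof -
  have F1: "tr (2 * m + 1) (phim * Fp (2 * m)) ((On m ^ 2 * pf m) * Fp (2 * m))"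
    by (rule tr_mult[OF phim_On tr_refl])
  have eq: "(On m ^ 2 * pf m) * Fp (2 * m) = (On m * pf m) * (On m * Fp (2 * m))"
    by (simp only: power2_eq_square ac_simps)
  have F3: "tr (2 * m + 1) ((On m * pf m) * (On m * Fp (2 * m))) (Ep (2 * m) * 1)"
    unfolding On_pf by (rule tr_mult[OF tr_refl tr_mono[OF OnFp]]) simp
  have "tr (2 * m + 1) (phim * Fp (2 * m)) (Ep (2 * m) * 1)"
    using tr_trans[OF F1[unfolded eq] F3] .
  then have "tr (2 * m + 1) (phim * Fp (2 * m)) (Ep (2 * m))" by simp
  then have A: "tr (m + 1) (phim * Fp (2 * m)) (Ep (2 * m))" by (rule tr_mono) simp
  have B: "tr (m + 1) (phim * Fp (2 * m)) (phim * Fp m)" by (rule tr_mult[OF tr_refl Fp_tr]) simp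
  have C: "tr (m + 1) (Ep (2 * m)) (Ep m)" by (rule Ep_tr) simp
  show ?thesis using tr_trans[OF tr_sym[OF B] tr_trans[OF A C]] .
qed

lemma Qp_Ep: "Qp m * Ep m = Fp m"
proof (induction m)
  case 0 then show ?case by (simp add: Qp_def Ep_def Fp_def)
next
  case (Suc m)
  have "Qp (Suc m) = Qp m * Ak (Suc m)" unfolding Qp_def by (simp add: prod.nat_ivl_Suc' mult.commute)
  then have "Qp (Suc m) * Ep (Suc m) = (Qp m * Ep m) * (Ak (Suc m) * (1 - fps_X ^ Suc m))"
    by (simp add: Ep_Suc algebra_simps)
  then show ?case using Suc.IH Ak_mult[of "Suc m"] by (simp add: Fp_Suc)
qed

definition GG :: "int fps" where "GG = Abs_fps (\<lambda>n. int (overpart n))"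

theorem gauss: "GG * phim = 1"
proof (rule fps_ext)
  fix m
  have "tr (m + 1) (Ep m * (phim * Qp m)) (Ep m * 1)"
    using phim_Fp[of m] Qp_Ep[of m] by (simp add: algebra_simps)
  then have A: "tr (m + 1) (phim * Qp m) 1" by (rule tr_cancel[OF Ep_nth0])
  have "tr (m + 1) GG (Qp m)" unfolding tr_def GG_def using overpart_Qp by simp
  then have "tr (m + 1) (GG * phim) (Qp m * phim)" by (rule tr_mult[OF _ tr_refl])
  then have "tr (m + 1) (GG * phim) 1" using A by (simp add: mult.commute tr_trans)
  then show "fps_nth (GG * phim) m = fps_nth 1 m" by (simp add: tr_def)
qed

definition c5 :: "int fps \<Rightarrow> int fps \<Rightarrow> bool" where
  "c5 f g \<longleftrightarrow> (\<forall>n. (5::int) dvd fps_nth f n - fps_nth g n)"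

lemma c5_refl[simp]: "c5 f f" by (simp add: c5_def)
lemma c5_sym: "c5 f g \<Longrightarrow> c5 g f"
  unfolding c5_def by (simp add: dvd_diff_commute)
lemma c5_trans: "c5 f g \<Longrightarrow> c5 g h \<Longrightarrow> c5 f h"
proof -
  assume "c5 f g" "c5 g h"
  then have "(5::int) dvd (fps_nth f n - fps_nth g n) + (fps_nth g n - fps_nth h n)" for n
    unfolding c5_def by (intro dvd_add) auto
  then show "c5 f h" unfolding c5_def by simp
qed
lemma c5_add: "c5 f g \<Longrightarrow> c5 f' g' \<Longrightarrow> c5 (f + f') (g + g')"
proof -
  assume "c5 f g" "c5 f' g'"
  then have "(5::int) dvd (fps_nth f n - fps_nth g n) + (fps_nth f' n - fps_nth g' n)" for n
    unfolding c5_def by (intro dvd_add) auto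
  then show ?thesis unfolding c5_def by (simp add: algebra_simps)
qed
lemma c5_mult: "c5 f g \<Longrightarrow> c5 (f * h) (g * h)"
proof -
  assume a: "c5 f g"
  show "c5 (f * h) (g * h)" unfolding c5_def
  proof
    fix n
    have "fps_nth (f * h) n - fps_nth (g * h) n = (\<Sum>i=0..n. (fps_nth f i - fps_nth g i) * fps_nth h (n - i))"
      by (simp add: fps_mult_nth sum_subtractf left_diff_distrib)
    also have "(5::int) dvd \<dots>" using a unfolding c5_def by (intro dvd_sum) auto
    finally show "(5::int) dvd fps_nth (f * h) n - fps_nth (g * h) n" .
  qed
qed
lemma c5_mult_left: "c5 f g \<Longrightarrow> c5 (h * f) (h * g)"
  using c5_mult[of f g h] by (simp add: mult.commute)
lemma c5_5: "c5 (5 * h) 0"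
  unfolding c5_def by (simp add: fps_numeral_mult_nth)

lemma fermat5: "(5::int) dvd c ^ 5 - c"
proof -
  define r where "r = c mod 5"
  have r: "r \<in> {0..4}" by (simp add: r_def)
  have "[c = r] (mod 5)" by (simp add: r_def cong_def)
  then have "[c ^ 5 = r ^ 5] (mod 5)" by (rule cong_pow)
  moreover have "[r ^ 5 = r] (mod 5)"
  proof -
    have "r = 0 \<or> r = 1 \<or> r = 2 \<or> r = 3 \<or> r = 4" using r by auto
    then show ?thesis by (auto simp: cong_def)
  qed
  moreover have "[r = c] (mod 5)" by (simp add: r_def cong_def)
  ultimately have "[c ^ 5 = c] (mod 5)" using cong_trans by blast
  then show ?thesis by (simp add: cong_iff_dvd_diff)
qed

lemma dl_const: "0 < d \<Longrightarrow> dl d (fps_const c) = fps_const c"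
  by (rule fps_ext) (auto simp: dl_nth)

lemma binom5: "((a::'a::comm_ring_1) + b) ^ 5 = a ^ 5 + 5 * (a^4 * b + 2 * a^3 * b^2 + 2 * a^2 * b^3 + a * b^4) + b ^ 5"
  by (simp add: eval_nat_numeral algebra_simps)

lemma frob: "c5 (f ^ 5) (dl 5 f)"
proof -
  have "\<forall>f. (5::int) dvd fps_nth (f ^ 5) n - fps_nth (dl 5 f) n" for n
  proof (induction n rule: less_induct)
    case (less n)
    show ?case
    proof
      fix f :: "int fps"
      define c where "c = fps_nth f 0"
      define g where "g = Abs_fps (\<lambda>i. fps_nth f (Suc i))"
      have f: "f = fps_const c + fps_X * g"
        by (rule fps_ext) (simp add: c_def g_def fps_X_mult_nth)
      define H where "H = fps_const c ^ 4 * (fps_X * g) + 2 * fps_const c ^ 3 * (fps_X * g) ^ 2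
         + 2 * fps_const c ^ 2 * (fps_X * g) ^ 3 + fps_const c * (fps_X * g) ^ 4"
      have p5: "f ^ 5 = fps_const (c ^ 5) + 5 * H + fps_X ^ 5 * g ^ 5"
        unfolding f H_def binom5 by (simp only: fps_const_power power_mult_distrib)
      have d5: "dl 5 f = fps_const c + fps_X ^ 5 * dl 5 g"
        unfolding f by (simp add: dl_add dl_mult dl_const dl_X)
      have "fps_nth (f ^ 5) n - fps_nth (dl 5 f) n =
         (if n = 0 then c ^ 5 - c else 0) + 5 * fps_nth H n + (fps_nth (fps_X ^ 5 * g ^ 5) n - fps_nth (fps_X ^ 5 * dl 5 g) n)"
        unfolding p5 d5 by (simp add: fps_numeral_mult_nth)
      moreover have "(5::int) dvd fps_nth (fps_X ^ 5 * g ^ 5) n - fps_nth (fps_X ^ 5 * dl 5 g) n"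
      proof (cases "n < 5")
        case True then show ?thesis by (simp add: fps_X_power_mult_nth)
      next
        case False
        then have "n - 5 < n" by simp
        then show ?thesis using less.IH False by (simp add: fps_X_power_mult_nth)
      qed
      ultimately show "(5::int) dvd fps_nth (f ^ 5) n - fps_nth (dl 5 f) n"
        using fermat5[of c] by simp
    qed
  qed
  then show ?thesis by (simp add: c5_def)
qed

section \<open>Sections mod 5\<close>

definition sec :: "int fps \<Rightarrow> int fps" where
  "sec f = Abs_fps (\<lambda>n. if 5 dvd n then fps_nth f n else 0)"

definition rs :: "nat \<Rightarrow> int fps \<Rightarrow> bool" where
  "rs r f \<longleftrightarrow> (\<forall>n. fps_nth f n \<noteq> 0 \<longrightarrow> n mod 5 = r)"

lemma sec_add: "sec (f + g) = sec f + sec g"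
  by (rule fps_ext) (simp add: sec_def)
lemma sec_num: "sec (numeral k * f) = numeral k * sec f"
  by (rule fps_ext) (simp add: sec_def fps_numeral_mult_nth)
lemma sec_c5: "c5 f g \<Longrightarrow> c5 (sec f) (sec g)"
  by (simp add: c5_def sec_def)

lemma sec_dl: "sec (dl 5 h * f) = dl 5 h * sec f"
proof (rule fps_ext)
  fix n
  have "fps_nth (dl 5 h * sec f) n = (\<Sum>i=0..n. fps_nth (dl 5 h) i * (if 5 dvd (n - i) then fps_nth f (n - i) else 0))"
    by (simp add: fps_mult_nth sec_def)
  also have "\<dots> = (\<Sum>i=0..n. if 5 dvd n then fps_nth (dl 5 h) i * fps_nth f (n - i) else 0)"
  proof (rule sum.cong)
    fix i assume i: "i \<in> {0..n}"
    show "fps_nth (dl 5 h) i * (if 5 dvd (n - i) then fps_nth f (n - i) else 0) =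
          (if 5 dvd n then fps_nth (dl 5 h) i * fps_nth f (n - i) else 0)"
    proof (cases "5 dvd i")
      case True
      have e: "n = (n - i) + i" using i by simp
      have "5 dvd (n - i) + i \<longleftrightarrow> 5 dvd (n - i)" by (rule dvd_add_left_iff[OF True])
      then have "5 dvd (n - i) \<longleftrightarrow> 5 dvd n" using e by simp
      then show ?thesis by simp
    next
      case False
      then show ?thesis by (simp add: dl_nth)
    qed
  qed simp
  also have "\<dots> = fps_nth (sec (dl 5 h * f)) n"
    by (simp add: sec_def fps_mult_nth)
  finally show "fps_nth (sec (dl 5 h * f)) n = fps_nth (dl 5 h * sec f) n" ..
qed

lemma rs_mult: assumes "rs r f" "rs s g" shows "rs ((r + s) mod 5) (f * g)"
  unfolding rs_def
proof (intro allI impI)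
  fix n assume "fps_nth (f * g) n \<noteq> 0"
  then obtain i where i: "i \<in> {0..n}" "fps_nth f i * fps_nth g (n - i) \<noteq> 0"
    unfolding fps_mult_nth by (rule sum.not_neutral_contains_not_neutral) blast
  then have "i mod 5 = r" "(n - i) mod 5 = s" using assms unfolding rs_def by auto
  moreover have "n = i + (n - i)" using i by simp
  ultimately show "n mod 5 = (r + s) mod 5" by (metis mod_add_eq)
qed

lemma rs_pow: "rs r f \<Longrightarrow> rs ((r * k) mod 5) (f ^ k)"
proof (induction k)
  case 0
  then show ?case by (simp add: rs_def)
next
  case (Suc k)
  then have "rs ((r + (r * k) mod 5) mod 5) (f * f ^ k)" by (intro rs_mult) auto
  then show ?case by (simp add: mod_add_right_eq algebra_simps)
qed

lemma rs_num: "rs r f \<Longrightarrow> rs r (numeral k * f)"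
  by (simp add: rs_def fps_numeral_mult_nth)

lemma sec_rs0: "rs 0 f \<Longrightarrow> sec f = f"
  by (rule fps_ext) (auto simp: rs_def sec_def)
lemma sec_rsn: "rs r f \<Longrightarrow> r \<noteq> 0 \<Longrightarrow> sec f = 0"
  by (rule fps_ext) (auto simp: rs_def sec_def)

lemma rs_ser: "(\<And>k. w k \<noteq> 0 \<Longrightarrow> e k mod 5 = r) \<Longrightarrow> rs r (ser e w)"
  unfolding rs_def ser_nth
proof (intro allI impI)
  fix n assume a: "\<And>k. w k \<noteq> 0 \<Longrightarrow> e k mod 5 = r" and s: "(\<Sum>k\<in>{k. e k = n}. w k) \<noteq> 0"
  obtain k where "k \<in> {k. e k = n}" "w k \<noteq> 0" using sum.not_neutral_contains_not_neutral[OF s] by blast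
  then show "n mod 5 = r" using a by auto
qed

lemma sq_mod5: "int (sq k mod 5) = (k mod 5)^2 mod 5"
proof -
  have "int (sq k mod 5) = k^2 mod 5" by (simp add: sq_def zmod_int)
  also have "\<dots> = (k mod 5)^2 mod 5" by (simp add: power_mod)
  finally show ?thesis .
qed

definition wa :: "int \<Rightarrow> int" where "wa k = (if k mod 5 = 0 then sg k else 0)"
definition wb :: "int \<Rightarrow> int" where "wb k = (if k mod 5 = 1 \<or> k mod 5 = 4 then sg k else 0)"
definition wc :: "int \<Rightarrow> int" where "wc k = (if k mod 5 = 2 \<or> k mod 5 = 3 then sg k else 0)"
definition AA where "AA = ser sq wa"
definition BB where "BB = ser sq wb"
definition CC where "CC = ser sq wc"

lemma rsA: "rs 0 AA" unfolding AA_def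
proof (rule rs_ser)
  fix k assume "wa k \<noteq> 0"
  then have "k mod 5 = 0" by (auto simp: wa_def split: if_splits)
  then have "int (sq k mod 5) = 0" by (simp add: sq_mod5)
  then show "sq k mod 5 = 0" by simp
qed

lemma rsB: "rs 1 BB" unfolding BB_def
proof (rule rs_ser)
  fix k assume "wb k \<noteq> 0"
  then have "k mod 5 = 1 \<or> k mod 5 = 4" by (auto simp: wb_def split: if_splits)
  then have "int (sq k mod 5) = 1" by (auto simp: sq_mod5)
  then show "sq k mod 5 = 1" by simp
qed

lemma rsC: "rs 4 CC" unfolding CC_def
proof (rule rs_ser)
  fix k assume "wc k \<noteq> 0"
  then have "k mod 5 = 2 \<or> k mod 5 = 3" by (auto simp: wc_def split: if_splits)
  then have "int (sq k mod 5) = 4" by (auto simp: sq_mod5)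
  then show "sq k mod 5 = 4" by simp
qed

lemma phim_ABC: "phim = AA + BB + CC"
proof -
  have "\<And>k. sg k = wa k + wb k + wc k"
  proof -
    fix k :: int
    have "k mod 5 \<in> {0..4}" by simp
    then have "k mod 5 = 0 \<or> k mod 5 = 1 \<or> k mod 5 = 2 \<or> k mod 5 = 3 \<or> k mod 5 = 4" by auto
    then show "sg k = wa k + wb k + wc k" by (auto simp: wa_def wb_def wc_def)
  qed
  then show ?thesis unfolding phim_def AA_def BB_def CC_def ser_add
    by (intro arg_cong[where f = "ser sq"] ext) simp
qed

section \<open>The lattice identity\<close>

definition sw :: "int \<Rightarrow> int \<Rightarrow> bool" where
  "sw x y \<longleftrightarrow> (x mod 5 = 3 \<and> y mod 5 = 1) \<or> (x mod 5 = 2 \<and> y mod 5 = 4)"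
definition sw' :: "int \<Rightarrow> int \<Rightarrow> bool" where
  "sw' x y \<longleftrightarrow> (x mod 5 = 1 \<and> y mod 5 = 3) \<or> (x mod 5 = 4 \<and> y mod 5 = 2)"
definition hmap :: "int \<times> int \<Rightarrow> int \<times> int" where
  "hmap p = (if sw (fst p + 2 * snd p) (2 * fst p - snd p) then (2 * fst p - snd p, fst p + 2 * snd p)
             else (fst p + 2 * snd p, 2 * fst p - snd p))"
definition gmap0 :: "int \<times> int \<Rightarrow> int \<times> int" where
  "gmap0 q = ((fst q + 2 * snd q) div 5, (2 * fst q - snd q) div 5)"
definition gmap :: "int \<times> int \<Rightarrow> int \<times> int" where
  "gmap q = (if sw' (fst q) (snd q) then gmap0 (snd q, fst q) else gmap0 q)"
definition Bs :: "(int \<times> int) set" where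
  "Bs = {(x,y). (x mod 5 = 0 \<and> y mod 5 = 0) \<or> ((x mod 5 = 1 \<or> x mod 5 = 4) \<and> (y mod 5 = 2 \<or> y mod 5 = 3))}"

lemma dvd5: "(5::int) dvd x + 2 * y \<longleftrightarrow> (x mod 5 + 2 * (y mod 5)) mod 5 = 0"
proof -
  have "(x mod 5 + 2 * (y mod 5)) mod 5 = (x mod 5 + (2 * (y mod 5)) mod 5) mod 5"
    by (rule mod_add_right_eq[symmetric])
  also have "(2 * (y mod 5)) mod 5 = (2 * y) mod 5" by (rule mod_mult_right_eq)
  also have "(x mod 5 + (2 * y) mod 5) mod 5 = (x + 2 * y) mod 5" by (rule mod_add_eq)
  finally have e: "(x + 2 * y) mod 5 = (x mod 5 + 2 * (y mod 5)) mod 5" ..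
  have "(5::int) dvd x + 2 * y \<longleftrightarrow> (x + 2 * y) mod 5 = 0" by (rule dvd_eq_mod_eq_0)
  then show ?thesis by (simp only: e)
qed

lemma fin_res: "(x::int) mod 5 = 0 \<or> x mod 5 = 1 \<or> x mod 5 = 2 \<or> x mod 5 = 3 \<or> x mod 5 = 4"
  by presburger

lemma R1: "(5::int) dvd x + 2 * y \<Longrightarrow> \<not> sw' x y"
  unfolding dvd5 sw'_def using fin_res[of x] fin_res[of y] by auto
lemma R2: "sw' y x \<longleftrightarrow> sw x y"
  unfolding sw_def sw'_def by auto
lemma R3: "(x, y) \<in> Bs \<Longrightarrow> sw' x y \<Longrightarrow> (5::int) dvd y + 2 * x"
  unfolding dvd5 sw'_def Bs_def using fin_res[of x] fin_res[of y] by auto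
lemma R4: "(x, y) \<in> Bs \<Longrightarrow> \<not> sw' x y \<Longrightarrow> (5::int) dvd x + 2 * y \<and> \<not> sw x y"
  unfolding dvd5 sw'_def sw_def Bs_def using fin_res[of x] fin_res[of y] by auto
lemma R5: "(5::int) dvd x + 2 * y \<Longrightarrow> (if sw x y then (y, x) else (x, y)) \<in> Bs"
  unfolding dvd5 sw_def Bs_def using fin_res[of x] fin_res[of y] by auto

lemma hmap_uv: "hmap (u, v) = (if sw (u + 2 * v) (2 * u - v) then (2 * u - v, u + 2 * v) else (u + 2 * v, 2 * u - v))"
  by (simp add: hmap_def)

lemma key5: "(u + 2 * v) + 2 * (2 * u - v) = 5 * (u::int)" "2 * (u + 2 * v) - (2 * u - v) = 5 * (v::int)"
  by simp_all

lemma hmap_in: "hmap p \<in> Bs"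
proof -
  obtain u v where p: "p = (u, v)" by fastforce
  have "(5::int) dvd (u + 2 * v) + 2 * (2 * u - v)" unfolding key5 by simp
  then show ?thesis unfolding p hmap_uv using R5 by simp
qed

lemma gmap0_eq: "gmap0 (u + 2 * v, 2 * u - v) = (u, v)"
  unfolding gmap0_def by (simp only: fst_conv snd_conv key5) simp

lemma gh: "gmap (hmap p) = p"
proof -
  obtain u v where p: "p = (u, v)" by fastforce
  have d: "(5::int) dvd (u + 2 * v) + 2 * (2 * u - v)" unfolding key5 by simp
  show ?thesis
  proof (cases "sw (u + 2 * v) (2 * u - v)")
    case True
    then show ?thesis unfolding p hmap_uv gmap_def using R2 gmap0_eq by simp
  next
    case False
    then show ?thesis unfolding p hmap_uv gmap_def using R1[OF d] gmap0_eq by simp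
  qed
qed

lemma g0_inv: assumes "(5::int) dvd x + 2 * y" shows "gmap0 (x, y) = (u, v) \<Longrightarrow> u + 2 * v = x \<and> 2 * u - v = y"
proof -
  assume g: "gmap0 (x, y) = (u, v)"
  obtain t where t: "x + 2 * y = 5 * t" using assms by (auto elim: dvdE)
  have h2: "2 * x - y = 5 * (2 * t - y)" using t by simp
  have d1: "(x + 2 * y) div 5 = t" by (simp add: t)
  have d2: "(2 * x - y) div 5 = 2 * t - y" by (simp add: h2)
  have "u = t" "v = 2 * t - y" using g d1 d2 unfolding gmap0_def by simp_all
  then show ?thesis using t by simp
qed

lemma hg: "q \<in> Bs \<Longrightarrow> hmap (gmap q) = q"
proof -
  assume q: "q \<in> Bs"
  obtain x y where qq: "q = (x, y)" by fastforce
  show ?thesis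
  proof (cases "sw' x y")
    case True
    obtain u v where uv: "gmap0 (y, x) = (u, v)" by fastforce
    have "u + 2 * v = y \<and> 2 * u - v = x" using g0_inv[OF R3[OF q[unfolded qq] True] uv] .
    moreover have "sw y x" using True R2 by simp
    ultimately show ?thesis unfolding qq gmap_def using True uv by (simp add: hmap_uv)
  next
    case False
    obtain u v where uv: "gmap0 (x, y) = (u, v)" by fastforce
    have r4: "(5::int) dvd x + 2 * y \<and> \<not> sw x y" using R4[OF q[unfolded qq] False] .
    then have "u + 2 * v = x \<and> 2 * u - v = y" using g0_inv uv by blast
    then show ?thesis unfolding qq gmap_def using False uv r4 by (simp add: hmap_uv)
  qed
qed

lemma fin5: "fin (\<lambda>k. 5 * sq k)"
  unfolding fin_def
proof
  fix n
  have "{k. 5 * sq k = n} \<subseteq> {k. sq k = n div 5}" by auto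
  moreover have "finite {k. sq k = n div 5}" using fin_sq unfolding fin_def by blast
  ultimately show "finite {k. 5 * sq k = n}" by (rule finite_subset)
qed

lemma sq_norm: "sq (u + 2 * v) + sq (2 * u - v) = 5 * sq u + 5 * sq v"
proof -
  have "int (sq (u + 2 * v) + sq (2 * u - v)) = (u + 2 * v)^2 + (2 * u - v)^2" by (simp add: sq_def)
  also have "\<dots> = 5 * u^2 + 5 * v^2" by (simp add: power2_eq_square algebra_simps)
  also have "\<dots> = int (5 * sq u + 5 * sq v)" by (simp add: sq_def)
  finally show ?thesis by (simp only: of_nat_eq_iff)
qed

lemma sg_uv: "sg (u + 2 * v) * sg (2 * u - v) = sg u * sg v"
  by (simp add: sg_def)

definition WW :: "int \<times> int \<Rightarrow> int" where
  "WW p = wa (fst p) * wa (snd p) + wb (fst p) * wc (snd p)"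

lemma WW_B: "(x, y) \<in> Bs \<Longrightarrow> WW (x, y) = sg x * sg y"
  unfolding Bs_def WW_def wa_def wb_def wc_def by auto
lemma WW_nB: "(x, y) \<notin> Bs \<Longrightarrow> WW (x, y) = 0"
  unfolding Bs_def WW_def wa_def wb_def wc_def by auto

lemma bij_hmap: "bij_betw hmap UNIV Bs"
  by (rule bij_betw_byWitness[where f' = gmap]) (use gh hg hmap_in in auto)

lemma lattice: "AA ^ 2 + BB * CC = dl 5 phim ^ 2"
proof -
  have L: "AA ^ 2 + BB * CC = ser (\<lambda>(k,l). sq k + sq l) WW"
    unfolding power2_eq_square AA_def BB_def CC_def ser_mult[OF fin_sq fin_sq] ser_add WW_def
    by (intro arg_cong[where f = "ser _"] ext) (simp add: case_prod_beta)
  have R: "dl 5 phim ^ 2 = ser (\<lambda>(k,l). 5 * sq k + 5 * sq l) (\<lambda>(k,l). sg k * sg l)"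
    unfolding power2_eq_square phim_def ser_dl[of 5, simplified] ser_mult[OF fin5 fin5] ..
  have "ser (\<lambda>(k,l). 5 * sq k + 5 * sq l) (\<lambda>(k,l). sg k * sg l) = ser (\<lambda>(k,l). sq k + sq l) WW"
  proof (rule ser_eq_bij[OF fin_pair[OF fin5 fin5] fin_pair[OF fin_sq fin_sq] bij_hmap])
    fix p :: "int \<times> int"
    obtain u v where p: "p = (u, v)" by fastforce
    show "(\<lambda>(k,l). sq k + sq l) (hmap p) = (\<lambda>(k,l). 5 * sq k + 5 * sq l) p"
      unfolding p hmap_uv using sq_norm[of u v] by auto
    have "WW (hmap p) = sg (u + 2 * v) * sg (2 * u - v)"
      using hmap_in[of p] unfolding p hmap_uv by (auto simp: WW_B split: if_splits)
    then show "WW (hmap p) = (\<lambda>(k,l). sg k * sg l) p" unfolding p using sg_uv by simp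
  next
    fix q :: "int \<times> int" assume "q \<notin> Bs"
    then show "WW q = 0" using WW_nB by (cases q) auto
  qed auto
  then show ?thesis using L R by simp
qed

section \<open>Fourth power section\<close>

lemma exp4: "((a::'a::comm_ring_1) + b + c) ^ 4 = a^4 * b^0 * c^0 + 4 * (a^3 * b^1 * c^0) + 4 * (a^3 * b^0 * c^1)
  + 6 * (a^2 * b^2 * c^0) + 12 * (a^2 * b^1 * c^1) + 6 * (a^2 * b^0 * c^2) + 4 * (a^1 * b^3 * c^0)
  + 12 * (a^1 * b^2 * c^1) + 12 * (a^1 * b^1 * c^2) + 4 * (a^1 * b^0 * c^3) + a^0 * b^4 * c^0
  + 4 * (a^0 * b^3 * c^1) + 6 * (a^0 * b^2 * c^2) + 4 * (a^0 * b^1 * c^3) + a^0 * b^0 * c^4"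
  by (simp add: eval_nat_numeral algebra_simps)

lemma sec_m: "sec (AA^i * BB^j * CC^l) = (if (j + 4 * l) mod 5 = 0 then AA^i * BB^j * CC^l else 0)"
proof -
  have "rs (((0 * i) mod 5 + (1 * j) mod 5) mod 5) (AA^i * BB^j)"
    by (rule rs_mult[OF rs_pow[OF rsA] rs_pow[OF rsB]])
  then have "rs ((((0 * i) mod 5 + (1 * j) mod 5) mod 5 + (4 * l) mod 5) mod 5) (AA^i * BB^j * CC^l)"
    by (rule rs_mult[OF _ rs_pow[OF rsC]])
  moreover have "(((0 * i) mod 5 + (1 * j) mod 5) mod 5 + (4 * l) mod 5) mod 5 = (j + 4 * l) mod 5"
    by (simp add: mod_add_eq)
  ultimately have r: "rs ((j + 4 * l) mod 5) (AA^i * BB^j * CC^l)" by simp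
  show ?thesis using sec_rs0[of "AA^i * BB^j * CC^l"] sec_rsn[OF r] r by auto
qed

lemma sec_phim4: "sec (phim ^ 4) = AA^4 + 12 * (AA^2 * BB * CC) + 6 * (BB^2 * CC^2)"
  unfolding phim_ABC
  apply (simp only: exp4 sec_add sec_num sec_m)
  apply simp
  done

lemma c5_plus5: "c5 (g + 5 * h) g"
  using c5_add[OF c5_refl c5_5[of h]] by simp

lemma T0_c5: "c5 (AA^4 + 12 * (AA^2 * BB * CC) + 6 * (BB^2 * CC^2)) ((AA^2 + BB * CC)^2)"
proof -
  have e: "AA^4 + 12 * (AA^2 * BB * CC) + 6 * (BB^2 * CC^2) = (AA^2 + BB * CC)^2 + 5 * (2 * (AA^2 * BB * CC) + BB^2 * CC^2)"
    by (simp add: eval_nat_numeral algebra_simps)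
  show ?thesis unfolding e by (rule c5_plus5)
qed

lemma dl5_G: "dl 5 GG * dl 5 phim = 1"
  using dl_mult[of 5 GG phim] gauss by simp

theorem sec_G: "c5 (sec GG) (dl 5 phim ^ 3)"
proof -
  define P where "P = dl 5 phim"
  have f: "c5 (GG * P) (GG * phim ^ 5)"
    unfolding P_def by (rule c5_mult_left[OF c5_sym[OF frob]])
  have "GG * phim ^ 5 = (GG * phim) * phim ^ 4" by (simp add: eval_nat_numeral algebra_simps)
  then have "GG * phim ^ 5 = phim ^ 4" using gauss by simp
  then have "c5 (sec (GG * P)) (sec (phim ^ 4))" using sec_c5[OF f] by simp
  moreover have "sec (GG * P) = P * sec GG" unfolding P_def by (subst mult.commute) (rule sec_dl)
  moreover have "c5 (sec (phim ^ 4)) (P ^ 4)"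
    using T0_c5 lattice unfolding sec_phim4 P_def by (simp add: power_mult[symmetric])
  ultimately have "c5 (P * sec GG) (P ^ 4)" using c5_trans by metis
  then have "c5 (dl 5 GG * (P * sec GG)) (dl 5 GG * P ^ 4)" by (rule c5_mult_left)
  moreover have "dl 5 GG * (P * sec GG) = sec GG" using dl5_G unfolding P_def by (simp add: mult.assoc[symmetric])
  moreover have "dl 5 GG * P ^ 4 = P ^ 3" using dl5_G unfolding P_def
    by (simp add: eval_nat_numeral mult.assoc[symmetric])
  ultimately show ?thesis unfolding P_def by simp
qed

lemma op5: "(5::int) dvd int (overpart (5 * m)) - fps_nth (phim ^ 3) m"
proof -
  have "(5::int) dvd fps_nth (sec GG) (5 * m) - fps_nth (dl 5 phim ^ 3) (5 * m)"
    using sec_G unfolding c5_def by blast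
  moreover have "fps_nth (sec GG) (5 * m) = int (overpart (5 * m))" by (simp add: sec_def GG_def)
  moreover have "fps_nth (dl 5 phim ^ 3) (5 * m) = fps_nth (phim ^ 3) m"
    by (simp add: dl_power[symmetric] dl_nth)
  ultimately show ?thesis by simp
qed

definition tri :: "nat \<Rightarrow> nat" where "tri k = k * (k + 1) div 2"

lemma tri_ge: "k \<le> tri k"
proof -
  have "k * 2 \<le> k * (k + 1)" by (cases k) auto
  then show ?thesis unfolding tri_def by (simp add: less_eq_div_iff_mult_less_eq)
qed

lemma fin_tri: "fin tri"
  unfolding fin_def
proof
  fix n
  have "{k. tri k = n} \<subseteq> {..n}" using tri_ge by (auto intro: order_trans)
  then show "finite {k. tri k = n}" by (rule finite_subset) simp
qed

lemma two_tri: "2 * tri k = k * (k + 1)"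
  unfolding tri_def by simp

lemma phi_ser: "phi = ser sq (\<lambda>_. 1)"
proof (rule fps_ext)
  fix n
  have "{k::int. k^2 = int n} = {k. sq k = n}" by (auto simp: sq_def)
  then show "fps_nth phi n = fps_nth (ser sq (\<lambda>_. 1)) n"
    by (simp add: phi_def ser_nth)
qed

lemma psi_ser: "psi = ser tri (\<lambda>_. 1)"
  by (rule fps_ext) (simp add: psi_def ser_nth tri_def)

lemma ser_bool: "fin e \<Longrightarrow> ser (\<lambda>(k, b::bool). e k) (\<lambda>_. 1) = 2 * ser e (\<lambda>_. 1)"
proof (rule fps_ext)
  fix n assume "fin e"
  then have f: "finite {k. e k = n}" by (simp add: fin_def)
  have "{p. (\<lambda>(k, b::bool). e k) p = n} = {k. e k = n} \<times> UNIV" by auto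
  then show "fps_nth (ser (\<lambda>(k, b::bool). e k) (\<lambda>_. 1)) n = fps_nth (2 * ser e (\<lambda>_. 1)) n"
    using f by (simp add: ser_nth fps_numeral_mult_nth card_cartesian_product)
qed

definition we :: "int \<Rightarrow> int" where "we k = (if even k then 1 else 0)"
definition wo :: "int \<Rightarrow> int" where "wo k = (if odd k then -1 else 0)"

lemma even_part: "ser sq we = dl 4 phi"
proof -
  have "ser (\<lambda>k. 4 * sq k) (\<lambda>_. 1) = ser sq we"
  proof (rule ser_eq_bij[where h = "\<lambda>k. 2 * k" and A = UNIV and B = "{k. even k}"])
    show "fin (\<lambda>k. 4 * sq k)"
      unfolding fin_def
    proof
      fix n
      have "{k. 4 * sq k = n} \<subseteq> {k. sq k = n div 4}" by auto
      moreover have "finite {k. sq k = n div 4}" using fin_sq unfolding fin_def by blast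
      ultimately show "finite {k. 4 * sq k = n}" by (rule finite_subset)
    qed
    show "fin sq" by (rule fin_sq)
    show "bij_betw (\<lambda>k. 2 * k) UNIV {k::int. even k}"
      by (rule bij_betw_byWitness[where f' = "\<lambda>k. k div 2"]) auto
    fix k :: int
    have "int (sq (2 * k)) = int (4 * sq k)" by (simp add: sq_def power_mult_distrib)
    then show "sq (2 * k) = 4 * sq k" by (simp only: of_nat_eq_iff)
    show "we (2 * k) = 1" by (simp add: we_def)
  qed (auto simp: we_def)
  then show ?thesis using phi_ser ser_dl[of 4 sq "\<lambda>_. 1"] by simp
qed

lemma sq_odd: "sq (2 * int k + 1) = 1 + 8 * tri k"
proof -
  have "int (sq (2 * int k + 1)) = 4 * (int k * (int k + 1)) + 1"
    by (simp add: sq_def power2_eq_square algebra_simps)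
  also have "int k * (int k + 1) = int (2 * tri k)" unfolding two_tri by (simp add: algebra_simps)
  finally show ?thesis by simp
qed

lemma sq_neg: "sq (- k) = sq k" by (simp add: sq_def)

lemma odd_part: "ser sq wo = - (2 * fps_X * dl 4 (dl 2 psi))"
proof -
  define h :: "nat \<times> bool \<Rightarrow> int" where "h p = (if snd p then 2 * int (fst p) + 1 else - (2 * int (fst p) + 1))" for p
  define g :: "int \<Rightarrow> nat \<times> bool" where "g j = (if 0 \<le> j then (nat ((j - 1) div 2), True) else (nat ((- j - 1) div 2), False))" for j
  have bij: "bij_betw h UNIV {k. odd k}"
  proof (rule bij_betw_byWitness[where f' = g])
    show "\<forall>a\<in>UNIV. g (h a) = a"
    proof
      fix a :: "nat \<times> bool"
      obtain k b where a: "a = (k, b)" by fastforce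
      show "g (h a) = a" unfolding a h_def g_def by (cases b) auto
    qed
    show "\<forall>a'\<in>{k. odd k}. h (g a') = a'"
    proof
      fix j :: int assume "j \<in> {k. odd k}"
      then obtain t where t: "j = 2 * t + 1" by (auto elim: oddE)
      show "h (g j) = j" unfolding h_def g_def t by auto
    qed
    show "h ` UNIV \<subseteq> {k. odd k}" unfolding h_def by auto
    show "g ` {k. odd k} \<subseteq> UNIV" by simp
  qed
  have "ser (\<lambda>(k, b::bool). 1 + 8 * tri k) (\<lambda>_. -1) = ser sq wo"
  proof (rule ser_eq_bij[OF _ fin_sq bij])
    show "fin (\<lambda>(k, b::bool). 1 + 8 * tri k)"
      unfolding fin_def
    proof
      fix n
      have "{p. (\<lambda>(k, b::bool). 1 + 8 * tri k) p = n} \<subseteq> {..n} \<times> UNIV"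
      proof
        fix p assume "p \<in> {p. (\<lambda>(k, b::bool). 1 + 8 * tri k) p = n}"
        moreover obtain k b where "p = (k, b)" by fastforce
        ultimately have "p = (k, b)" "1 + 8 * tri k = n" by auto
        then show "p \<in> {..n} \<times> UNIV" using tri_ge[of k] by simp
      qed
      then show "finite {p. (\<lambda>(k, b::bool). 1 + 8 * tri k) p = n}" by (rule finite_subset) simp
    qed
    fix p :: "nat \<times> bool"
    obtain k b where p: "p = (k, b)" by fastforce
    have "sq (h p) = 1 + 8 * tri k"
    proof (cases b)
      case True
      then have "h p = 2 * int k + 1" unfolding p h_def by simp
      then show ?thesis by (simp only: sq_odd)
    next
      case False
      then have "h p = - (2 * int k + 1)" unfolding p h_def by simp
      then show ?thesis by (simp only: sq_neg sq_odd)
    qed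
    then show "sq (h p) = (\<lambda>(k, b). 1 + 8 * tri k) p" using p by simp
    show "wo (h p) = -1" unfolding p h_def wo_def by (cases b) auto
  qed (auto simp: wo_def)
  moreover have "ser (\<lambda>(k, b::bool). 1 + 8 * tri k) (\<lambda>_. -1) = - ser (\<lambda>(k, b::bool). 1 + 8 * tri k) (\<lambda>_. 1)"
  proof -
    have "- ser (\<lambda>(k, b::bool). 1 + 8 * tri k) (\<lambda>_. 1) = fps_const (-1) * ser (\<lambda>(k, b::bool). 1 + 8 * tri k) (\<lambda>_. 1)"
      by (rule fps_ext) (simp add: fps_mult_left_const_nth)
    also have "\<dots> = ser (\<lambda>(k, b::bool). 1 + 8 * tri k) (\<lambda>k. -1 * 1)" by (rule ser_scale)
    finally show ?thesis by simp
  qed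
  moreover have "ser (\<lambda>(k, b::bool). 1 + 8 * tri k) (\<lambda>_. 1) = 2 * ser (\<lambda>k. 1 + 8 * tri k) (\<lambda>_. 1)"
  proof -
    have "fin (\<lambda>k. 1 + 8 * tri k)"
      unfolding fin_def
    proof
      fix n
      have "{k. 1 + 8 * tri k = n} \<subseteq> {..n}"
      proof
        fix k assume "k \<in> {k. 1 + 8 * tri k = n}"
        then show "k \<in> {..n}" using tri_ge[of k] by simp
      qed
      then show "finite {k. 1 + 8 * tri k = n}" by (rule finite_subset) simp
    qed
    then show ?thesis using ser_bool[of "\<lambda>k. 1 + 8 * tri k"] by simp
  qed
  moreover have "ser (\<lambda>k. 1 + 8 * tri k) (\<lambda>_. 1) = fps_X * dl 4 (dl 2 psi)"
  proof -
    have "dl 4 (dl 2 psi) = ser (\<lambda>k. 4 * (2 * tri k)) (\<lambda>_. 1)"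
      unfolding psi_ser by (simp add: ser_dl)
    then have "fps_X ^ 1 * dl 4 (dl 2 psi) = ser (\<lambda>k. 1 + 4 * (2 * tri k)) (\<lambda>_. 1)"
      by (simp only: ser_shift)
    then show ?thesis by simp
  qed
  ultimately show ?thesis by (simp add: mult.assoc)
qed

lemma phim_dis: "phim = dl 4 phi - 2 * fps_X * dl 4 (dl 2 psi)"
proof -
  have "sg = (\<lambda>k. we k + wo k)" by (rule ext) (simp add: sg_def we_def wo_def)
  then have "phim = ser sq we + ser sq wo" unfolding phim_def ser_add by simp
  then show ?thesis using even_part odd_part by simp
qed

lemma cube: "((a::'a::comm_ring_1) - 2 * x * b) ^ 3 = x^0 * a^3 - 6 * (x^1 * (a^2 * b)) + 12 * (x^2 * (a * b^2)) - 8 * (x^3 * b^3)"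
  by (simp add: eval_nat_numeral algebra_simps)

lemma xdl: assumes "r < 4" "s < 4"
  shows "fps_nth (fps_X ^ r * dl 4 h) (4 * n + s) = (if r = s then fps_nth h n else 0)"
proof (cases "4 * n + s < r")
  case True
  then have "r \<noteq> s" by auto
  then show ?thesis using True by (simp add: fps_X_power_mult_nth)
next
  case False
  then have v: "fps_nth (fps_X ^ r * dl 4 h) (4 * n + s) = (if 4 dvd (4 * n + s - r) then fps_nth h ((4 * n + s - r) div 4) else 0)"
    by (simp add: fps_X_power_mult_nth dl_nth)
  show ?thesis
  proof (cases "r = s")
    case True
    then show ?thesis using v by simp
  next
    case ne: False
    have "\<not> 4 dvd (4 * n + s - r)" using False ne assms by presburger
    then show ?thesis using v ne by simp
  qed
qed

definition Psi :: "int fps" where "Psi = dl 2 psi"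

lemma phim3: "phim ^ 3 = fps_X ^ 0 * dl 4 (phi ^ 3) - 6 * (fps_X ^ 1 * dl 4 (phi ^ 2 * Psi))
   + 12 * (fps_X ^ 2 * dl 4 (phi * Psi ^ 2)) - 8 * (fps_X ^ 3 * dl 4 (Psi ^ 3))"
  unfolding phim_dis cube Psi_def by (simp only: dl_mult dl_power zero_less_numeral)

lemma coef: "s < 4 \<Longrightarrow> fps_nth (phim ^ 3) (4 * n + s) =
   (if 0 = s then fps_nth (phi ^ 3) n else 0) - 6 * (if 1 = s then fps_nth (phi ^ 2 * Psi) n else 0)
   + 12 * (if 2 = s then fps_nth (phi * Psi ^ 2) n else 0) - 8 * (if 3 = s then fps_nth (Psi ^ 3) n else 0)"
proof -
  assume s4: "s < 4"
  have x0: "fps_nth (fps_X ^ 0 * dl 4 h) (4 * n + s) = (if 0 = s then fps_nth h n else 0)" for h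
    by (rule xdl) (simp_all add: s4)
  have x1: "fps_nth (fps_X ^ 1 * dl 4 h) (4 * n + s) = (if 1 = s then fps_nth h n else 0)" for h
    by (rule xdl) (simp_all add: s4)
  have x2: "fps_nth (fps_X ^ 2 * dl 4 h) (4 * n + s) = (if 2 = s then fps_nth h n else 0)" for h
    by (rule xdl) (simp_all add: s4)
  have x3: "fps_nth (fps_X ^ 3 * dl 4 h) (4 * n + s) = (if 3 = s then fps_nth h n else 0)" for h
    by (rule xdl) (simp_all add: s4)
  show ?thesis unfolding phim3
    by (simp only: fps_add_nth fps_sub_nth fps_numeral_mult_nth x0 x1 x2 x3)
qed

lemma opk: "s < 4 \<Longrightarrow> (5::int) dvd int (overpart (20 * n + 5 * s)) - fps_nth (phim ^ 3) (4 * n + s)"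
proof -
  have e: "5 * (4 * n + s) = 20 * n + 5 * s" by simp
  show ?thesis using op5[of "4 * n + s"] by (simp only: e)
qed

lemma fin_cong: "(5::int) dvd a - c * x \<Longrightarrow> [c = d] (mod 5) \<Longrightarrow> [a = d * x] (mod 5)"
proof -
  assume a1: "(5::int) dvd a - c * x" and a2: "[c = d] (mod 5)"
  have "[a = c * x] (mod 5)" using a1 by (simp add: cong_iff_dvd_diff)
  moreover have "[c * x = d * x] (mod 5)" by (rule cong_mult[OF a2 cong_refl])
  ultimately show ?thesis by (rule cong_trans)
qed

theorem mainTheorem11:
  shows "(\<forall>n. [int (overpart (20 * n)) = fps_nth (phi ^ 3) n] (mod 5)) \<and>
    (\<forall>n. [int (overpart (20 * n + 5)) = fps_nth (- (phi ^ 2 * fps_compose psi (fps_X ^ 2))) n] (mod 5)) \<and>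
    (\<forall>n. [int (overpart (20 * n + 10)) = fps_nth (2 * phi * (fps_compose psi (fps_X ^ 2)) ^ 2) n] (mod 5)) \<and>
    (\<forall>n. [int (overpart (20 * n + 15)) = fps_nth (- 3 * (fps_compose psi (fps_X ^ 2)) ^ 3) n] (mod 5))"
proof -
  have P: "fps_compose psi (fps_X ^ 2) = Psi" by (simp add: Psi_def dl_def)
  have A: "[int (overpart (20 * n)) = fps_nth (phi ^ 3) n] (mod 5)" for n
  proof -
    have "(5::int) dvd int (overpart (20 * n + 5 * 0)) - fps_nth (phim ^ 3) (4 * n + 0)" by (rule opk) simp
    moreover have "fps_nth (phim ^ 3) (4 * n + 0) = fps_nth (phi ^ 3) n" by (subst coef) simp_all
    ultimately have "(5::int) dvd int (overpart (20 * n)) - 1 * fps_nth (phi ^ 3) n" by simp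
    then have "[int (overpart (20 * n)) = 1 * fps_nth (phi ^ 3) n] (mod 5)" by (rule fin_cong) simp
    then show ?thesis by simp
  qed
  have B: "[int (overpart (20 * n + 5)) = fps_nth (- (phi ^ 2 * fps_compose psi (fps_X ^ 2))) n] (mod 5)" for n
  proof -
    have "(5::int) dvd int (overpart (20 * n + 5 * 1)) - fps_nth (phim ^ 3) (4 * n + 1)" by (rule opk) simp
    moreover have "fps_nth (phim ^ 3) (4 * n + 1) = - 6 * fps_nth (phi ^ 2 * Psi) n" by (subst coef) simp_all
    ultimately have "(5::int) dvd int (overpart (20 * n + 5)) - (- 6) * fps_nth (phi ^ 2 * Psi) n" by simp
    then have "[int (overpart (20 * n + 5)) = (- 1) * fps_nth (phi ^ 2 * Psi) n] (mod 5)"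
      by (rule fin_cong) (simp add: cong_def)
    then show ?thesis unfolding P by simp
  qed
  have C: "[int (overpart (20 * n + 10)) = fps_nth (2 * phi * (fps_compose psi (fps_X ^ 2)) ^ 2) n] (mod 5)" for n
  proof -
    have "(5::int) dvd int (overpart (20 * n + 5 * 2)) - fps_nth (phim ^ 3) (4 * n + 2)" by (rule opk) simp
    moreover have "fps_nth (phim ^ 3) (4 * n + 2) = 12 * fps_nth (phi * Psi ^ 2) n" by (subst coef) simp_all
    ultimately have "(5::int) dvd int (overpart (20 * n + 10)) - 12 * fps_nth (phi * Psi ^ 2) n" by simp
    then have "[int (overpart (20 * n + 10)) = 2 * fps_nth (phi * Psi ^ 2) n] (mod 5)"
      by (rule fin_cong) (simp add: cong_def)
    moreover have "fps_nth (2 * phi * Psi ^ 2) n = 2 * fps_nth (phi * Psi ^ 2) n"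
      by (simp add: mult.assoc fps_numeral_mult_nth)
    ultimately show ?thesis unfolding P by simp
  qed
  have D: "[int (overpart (20 * n + 15)) = fps_nth (- 3 * (fps_compose psi (fps_X ^ 2)) ^ 3) n] (mod 5)" for n
  proof -
    have "(5::int) dvd int (overpart (20 * n + 5 * 3)) - fps_nth (phim ^ 3) (4 * n + 3)" by (rule opk) simp
    moreover have "fps_nth (phim ^ 3) (4 * n + 3) = - 8 * fps_nth (Psi ^ 3) n" by (subst coef) simp_all
    ultimately have "(5::int) dvd int (overpart (20 * n + 15)) - (- 8) * fps_nth (Psi ^ 3) n" by simp
    then have "[int (overpart (20 * n + 15)) = (- 3) * fps_nth (Psi ^ 3) n] (mod 5)"
      by (rule fin_cong) (simp add: cong_def)
    moreover have "fps_nth (- 3 * Psi ^ 3) n = (- 3) * fps_nth (Psi ^ 3) n"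
      by (simp add: fps_numeral_mult_nth)
    ultimately show ?thesis unfolding P by simp
  qed
  show ?thesis using A B C D by blast
qed

end
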